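(* Let $\{X_n\}$ be an absorbing random leap on $\{0,\dots,N\}$ with $N\ge k_p+k_q$, let $T=\min\{n\ge0:X_n\in\{0,N\}\}$ and $v_i=E(T\mid X_0=i)$. Then $\det(\mathbf A_N\mathbf Z)\ne 0$ and \[ v_i=\frac{\det(\mathbf A^\star_i\mathbf Z^\star)}{\det(\mathbf A_N\mathbf Z)}\qquad\text{for every } i\in\{0,\dots,N\}. \]
   Context: Fix an integer $k\ge1$ and nonnegative reals $p_1,\dots,p_k,q_1,\dots,q_k$ with $\sum_{j=1}^k(p_j+q_j)=1$, $\sum_{j=1}^k p_j>0$ and $\sum_{j=1}^k q_j>0$. Let $k_p=\max\{j:p_j>0\}$ and $k_q=\max\{j:q_j>0\}$. Let $\xi$ be a random variable with $P(\xi=\ell)=p_\ell$ and $P(\xi=-\ell)=q_\ell$ for $1\le\ell\le k$. For an integer $N\ge k_p+k_q$, the absorbing random leap is the Markov chain on $\{0,\dots,N\}$ in which $0$ and $N$ are absorbing and, for $0<i<N$: $P(i\to j)=P(i+\xi=j)$ for $1\le j\le N-1$, $P(i\to0)=P(i+\xi\le0)$, $P(i\to N)=P(i+\xi\ge N)$. Characteristic polynomial: $\chi(z)=\sum_{j=0}^{2k-1}c_jz^j$ where $c_j=-\sum_{\ell=k-j}^k q_\ell$ for $0\le j\le k-1$ and $c_j=\sum_{\ell=j-k+1}^k p_\ell$ for $k\le j\le 2k-1$. Counted with multiplicity, $\chi$ has exactly $r:=k_p+k_q-1$ nonzero roots; let $z_1,\dots,z_s$ be the distinct nonzero roots with multiplicities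 $r_1,\dots,r_s$. For each $j$ let $\mathbf Z^{(j)}$ be the $(N+r-1)\times r_j$ matrix with entries $Z^{(j)}_{i,\ell}=(i+1-k_q)^{\ell-1}z_j^{\,i+1-k_q}$ ($1\le i\le N+r-1$), with $0^0=1$, and $\mathbf Z=(\mathbf Z^{(1)}\ \cdots\ \mathbf Z^{(s)})$. Accordion matrix: for $i\in\{0,\dots,N\}$, $\mathbf A_i=\begin{pmatrix}I_{k_q-1}&0&0&0\\0&\mathbf 1_i^T&\mathbf 0_{N-i}^T&0\\0&0&0&I_{k_p-1}\end{pmatrix}$, an $r\times(N+r-1)$ matrix (column blocks of widths $k_q-1,i,N-i,k_p-1$). Extended accordion matrix: $\mathbf A^\star_i$ is the $(r+1)\times(N+r-1)$ matrix obtained by appending to $\mathbf A_N$ the $k_q$-th row of $\mathbf A_i$ (the row with ones in columns $k_q,\dots,k_q+i-1$ and zeros elsewhere) as a last row. Let $\mu=\sum_{j=1}^k j(p_j-q_j)$ and $\sigma^2=\sum_{j=1}^k j^2(p_j+q_j)-\mu^2$. Let $\boldsymbol\delta=(\delta_{2-k_q},\delta_{3-k_q},\dots,\delta_{N+k_p-1})^T$ (length $N+r-1$) with $\delta_i=-1/\mu$ if $\mu\ne0$ and $\delta_i=-2i/\sigma^2$ if $\mu=0$. Let $\mathbf Z^\star=(\mathbf Z\ \ \boldsymbol\delta)$, an $(N+r-1)\times(r+1)$ matrix. *)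

theory Defs
  imports "HOL-Probability.Probability_Mass_Function" "Jordan_Normal_Form.Determinant"
    "HOL-Computational_Algebra.Polynomial"
begin

(* Vectors p, q : nat => real, only indices 1..k are used. *)

definition kp :: "nat \<Rightarrow> (nat \<Rightarrow> real) \<Rightarrow> nat" where
  "kp k p = Max {j. 1 \<le> j \<and> j \<le> k \<and> p j > 0}"

definition kq :: "nat \<Rightarrow> (nat \<Rightarrow> real) \<Rightarrow> nat" where
  "kq k q = Max {j. 1 \<le> j \<and> j \<le> k \<and> q j > 0}"

definition xi_pmf :: "nat \<Rightarrow> (nat \<Rightarrow> real) \<Rightarrow> (nat \<Rightarrow> real) \<Rightarrow> int pmf" where
  "xi_pmf k p q = embed_pmf (\<lambda>x::int.
     if 1 \<le> x \<and> x \<le> int k then p (nat x)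
     else if - int k \<le> x \<and> x \<le> -1 then q (nat (- x)) else 0)"

definition clampN :: "nat \<Rightarrow> int \<Rightarrow> nat" where
  "clampN N x = (if x \<le> 0 then 0 else if x \<ge> int N then N else nat x)"

definition leap_step :: "nat \<Rightarrow> (nat \<Rightarrow> real) \<Rightarrow> (nat \<Rightarrow> real) \<Rightarrow> nat \<Rightarrow> nat \<Rightarrow> nat pmf" where
  "leap_step k p q N i =
     (if 0 < i \<and> i < N then map_pmf (\<lambda>x. clampN N (int i + x)) (xi_pmf k p q)
      else return_pmf i)"

primrec leap_paths :: "nat \<Rightarrow> (nat \<Rightarrow> real) \<Rightarrow> (nat \<Rightarrow> real) \<Rightarrow> nat \<Rightarrow> nat \<Rightarrow> nat \<Rightarrow> nat list pmf" where
  "leap_paths k p q N i 0 = return_pmf [i]"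
| "leap_paths k p q N i (Suc n) =
     bind_pmf (leap_paths k p q N i n)
       (\<lambda>xs. map_pmf (\<lambda>j. xs @ [j]) (leap_step k p q N (last xs)))"

(* P(T > n | X_0 = i) = P(X_0,...,X_n all outside {0,N} | X_0 = i) *)
definition tail_prob :: "nat \<Rightarrow> (nat \<Rightarrow> real) \<Rightarrow> (nat \<Rightarrow> real) \<Rightarrow> nat \<Rightarrow> nat \<Rightarrow> nat \<Rightarrow> real" where
  "tail_prob k p q N i n =
     measure_pmf.prob (leap_paths k p q N i n) {xs. \<forall>x\<in>set xs. x \<noteq> 0 \<and> x \<noteq> N}"

(* E(T | X_0 = i) = sum_{n>=0} P(T > n | X_0 = i), as an extended nonnegative real *)
definition expected_absorption :: "nat \<Rightarrow> (nat \<Rightarrow> real) \<Rightarrow> (nat \<Rightarrow> real) \<Rightarrow> nat \<Rightarrow> nat \<Rightarrow> ennreal" where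
  "expected_absorption k p q N i = (\<Sum>n. ennreal (tail_prob k p q N i n))"

definition chi_coeff :: "nat \<Rightarrow> (nat \<Rightarrow> real) \<Rightarrow> (nat \<Rightarrow> real) \<Rightarrow> nat \<Rightarrow> real" where
  "chi_coeff k p q j =
     (if j < k then - (\<Sum>l = k - j..k. q l)
      else if j < 2 * k then (\<Sum>l = j + 1 - k..k. p l) else 0)"

definition chi :: "nat \<Rightarrow> (nat \<Rightarrow> real) \<Rightarrow> (nat \<Rightarrow> real) \<Rightarrow> complex poly" where
  "chi k p q = Poly (map (\<lambda>j. complex_of_real (chi_coeff k p q j)) [0..<2 * k])"

definition Z_cols :: "complex poly \<Rightarrow> complex list \<Rightarrow> (complex \<times> nat) list" where
  "Z_cols P zs = concat (map (\<lambda>z. map (\<lambda>l. (z, l)) [1..<order z P + 1]) zs)"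

(* Z: (N+r-1) x (sum r_j); 0-based row t is the paper's row i = t+1,
   entry (i+1-kq)^(l-1) * z^(i+1-kq) *)
definition Zmat :: "nat \<Rightarrow> nat \<Rightarrow> nat \<Rightarrow> complex poly \<Rightarrow> complex list \<Rightarrow> complex mat" where
  "Zmat N r kqv P zs = mat (N + r - 1) (length (Z_cols P zs))
     (\<lambda>(t, c). let (z, l) = Z_cols P zs ! c; e = int t + 2 - int kqv
               in of_int e ^ (l - 1) * z powi e)"

definition accordion :: "nat \<Rightarrow> nat \<Rightarrow> nat \<Rightarrow> nat \<Rightarrow> complex mat" where
  "accordion N kpv kqv i = mat (kpv + kqv - 1) (N + kpv + kqv - 2)
     (\<lambda>(a, c). if a < kqv - 1 then (if c = a then 1 else 0)
               else if a = kqv - 1 then (if kqv - 1 \<le> c \<and> c < kqv - 1 + i then 1 else 0)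
               else (if c = kqv - 1 + N + (a - kqv) then 1 else 0))"

definition accordion_ext :: "nat \<Rightarrow> nat \<Rightarrow> nat \<Rightarrow> nat \<Rightarrow> complex mat" where
  "accordion_ext N kpv kqv i = mat (kpv + kqv) (N + kpv + kqv - 2)
     (\<lambda>(a, c). if a < kpv + kqv - 1 then accordion N kpv kqv N $$ (a, c)
               else accordion N kpv kqv i $$ (kqv - 1, c))"

definition drift :: "nat \<Rightarrow> (nat \<Rightarrow> real) \<Rightarrow> (nat \<Rightarrow> real) \<Rightarrow> real" where
  "drift k p q = (\<Sum>j = 1..k. real j * (p j - q j))"

definition variance_xi :: "nat \<Rightarrow> (nat \<Rightarrow> real) \<Rightarrow> (nat \<Rightarrow> real) \<Rightarrow> real" where
  "variance_xi k p q = (\<Sum>j = 1..k. (real j)\<^sup>2 * (p j + q j)) - (drift k p q)\<^sup>2"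

definition delta_entry :: "real \<Rightarrow> real \<Rightarrow> int \<Rightarrow> complex" where
  "delta_entry \<mu> \<sigma>2 idx = (if \<mu> \<noteq> 0 then complex_of_real (- 1 / \<mu>)
                            else complex_of_real (- 2 * real_of_int idx / \<sigma>2))"

(* Z* = (Z delta); 0-based row t corresponds to delta_{t+2-kq} *)
definition Zstar :: "nat \<Rightarrow> nat \<Rightarrow> nat \<Rightarrow> complex poly \<Rightarrow> complex list \<Rightarrow> real \<Rightarrow> real \<Rightarrow> complex mat" where
  "Zstar N r kqv P zs \<mu> \<sigma>2 = mat (N + r - 1) (length (Z_cols P zs) + 1)
     (\<lambda>(t, c). if c < length (Z_cols P zs) then Zmat N r kqv P zs $$ (t, c)
               else delta_entry \<mu> \<sigma>2 (int t + 2 - int kqv))"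

end

theory Submission
  imports Defs "HOL-Computational_Algebra.Fundamental_Theorem_Algebra"
begin



definition Wm :: "nat \<Rightarrow> complex poly \<Rightarrow> complex \<Rightarrow> complex \<Rightarrow> nat \<Rightarrow> complex" where
  "Wm n D z s a = (\<Sum>t<n. coeff D t * (of_nat t + s)^a * z^t)"

lemma Wm_shift:
  assumes "\<forall>a<m. Wm n D z s a = 0" "a < m"
  shows "Wm n D z s' a = 0"
proof -
  have "Wm n D z s' a = (\<Sum>t<n. coeff D t * (\<Sum>c\<le>a. of_nat (a choose c) * (of_nat t + s)^c * (s'-s)^(a-c)) * z^t)"
    unfolding Wm_def
  proof (rule sum.cong[OF refl])
    fix t
    have "(of_nat t + s') = (of_nat t + s) + (s' - s)" by simp
    then show "coeff D t * (of_nat t + s') ^ a * z ^ t =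
         coeff D t * (\<Sum>c\<le>a. of_nat (a choose c) * (of_nat t + s) ^ c * (s' - s) ^ (a - c)) * z ^ t"
      by (simp only: binomial_ring)
  qed
  also have "\<dots> = (\<Sum>c\<le>a. of_nat (a choose c) * (s'-s)^(a-c) * Wm n D z s c)"
    unfolding Wm_def sum_distrib_left sum_distrib_right
    by (subst sum.swap) (auto intro!: sum.cong simp: algebra_simps)
  also have "\<dots> = 0" using assms by (intro sum.neutral) auto
  finally show ?thesis .
qed

lemma Wm_factor:
  assumes D: "D = [:-z,1:] * E" and n: "degree D < n"
  shows "Wm n D z 0 a = z * (\<Sum>c<a. of_nat (a choose c) * Wm n E z 0 c)"
proof -
  have D': "D = pCons 0 E - Polynomial.smult z E" using D by (simp add: mult_pCons_left)
  have E0: "E \<noteq> 0 \<Longrightarrow> degree E < n - 1" using n D degree_mult_eq[of "[:-z,1:]" E] by (simp del: mult_pCons_left)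
  have cE: "\<And>t. t \<ge> n - 1 \<Longrightarrow> coeff E t = 0"
    using E0 by (cases "E = 0") (auto intro: coeff_eq_0)
  have npos: "n > 0" using n by simp
  have "Wm n D z 0 a = (\<Sum>t<n. coeff (pCons 0 E) t * of_nat t ^ a * z^t)
                       - z * (\<Sum>t<n. coeff E t * of_nat t ^ a * z^t)"
    unfolding Wm_def D' by (simp add: sum_subtractf sum_distrib_left algebra_simps)
  also have "(\<Sum>t<n. coeff (pCons 0 E) t * of_nat t ^ a * z^t)
       = (\<Sum>t<n-1. coeff E t * of_nat (Suc t) ^ a * z^(Suc t))"
  proof -
    obtain n' where n': "n = Suc n'" using npos by (cases n) auto
    show ?thesis unfolding n' by (subst sum.lessThan_Suc_shift) simp
  qed
  also have "\<dots> = (\<Sum>t<n. coeff E t * of_nat (Suc t) ^ a * z^(Suc t))"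
  proof -
    obtain n' where n': "n = Suc n'" using npos by (cases n) auto
    show ?thesis unfolding n' using cE[of n'] by (simp add: n')
  qed
  also have "\<dots> - z * (\<Sum>t<n. coeff E t * of_nat t ^ a * z^t)
     = z * (\<Sum>t<n. coeff E t * (of_nat (Suc t) ^ a - of_nat t ^ a) * z^t)"
    by (simp add: sum_distrib_left sum_subtractf algebra_simps)
  also have "(\<Sum>t<n. coeff E t * (of_nat (Suc t) ^ a - of_nat t ^ a) * z^t)
      = (\<Sum>t<n. coeff E t * (\<Sum>c<a. of_nat (a choose c) * of_nat t ^ c) * z^t)"
  proof (rule sum.cong[OF refl])
    fix t
    have "(of_nat (Suc t) :: complex) ^ a = (of_nat t + 1) ^ a" by (simp add: add.commute)
    also have "\<dots> = (\<Sum>c\<le>a. of_nat (a choose c) * of_nat t ^ c * 1 ^ (a - c))"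
      by (rule binomial_ring)
    also have "\<dots> = (\<Sum>c<a. of_nat (a choose c) * of_nat t ^ c) + of_nat t ^ a"
      by (simp add: lessThan_Suc_atMost[symmetric])
    finally show "coeff E t * (of_nat (Suc t) ^ a - of_nat t ^ a) * z ^ t =
         coeff E t * (\<Sum>c<a. of_nat (a choose c) * of_nat t ^ c) * z ^ t" by simp
  qed
  also have "\<dots> = (\<Sum>c<a. of_nat (a choose c) * Wm n E z 0 c)"
    unfolding Wm_def sum_distrib_left sum_distrib_right
    by (subst sum.swap) (auto intro!: sum.cong simp: algebra_simps)
  finally show ?thesis .
qed

lemma order_factor:
  fixes D :: "complex poly"
  assumes "D \<noteq> 0" "poly D z = 0"
  obtains E where "D = [:-z,1:] * E" "E \<noteq> 0" "order z D = Suc (order z E)" "degree D = Suc (degree E)"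
proof -
  obtain E where E: "D = [:-z,1:] * E" using assms poly_eq_0_iff_dvd by (metis dvdE)
  have "E \<noteq> 0" using E assms by auto
  moreover have "order z D = Suc (order z E)"
    using E assms order_mult[of "[:-z,1:]" E z] order_power_n_n[of z 1] by simp
  moreover have "degree D = Suc (degree E)"
    using E \<open>E \<noteq> 0\<close> degree_mult_eq[of "[:-z,1:]" E] by (simp del: mult_pCons_left)
  ultimately show ?thesis using E that by blast
qed

lemma Wm_order_imp:
  assumes "D \<noteq> 0" "degree D < n" "m \<le> order z D" "a < m"
  shows "Wm n D z 0 a = 0"
  using assms
proof (induction m arbitrary: D a)
  case 0 then show ?case by simp
next
  case (Suc m)
  have "poly D z = 0" using Suc.prems order_root by fastforce
  then obtain E where E: "D = [:-z,1:] * E" "E \<noteq> 0" "order z D = Suc (order z E)" "degree D = Suc (degree E)"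
    using order_factor Suc.prems(1) by blast
  have "Wm n D z 0 a = z * (\<Sum>c<a. of_nat (a choose c) * Wm n E z 0 c)"
    using Wm_factor E Suc.prems by blast
  also have "\<dots> = 0"
    using Suc.IH[of E] E Suc.prems by (intro mult_eq_0_iff[THEN iffD2] disjI2 sum.neutral) auto
  finally show ?case .
qed

lemma Wm_0_poly: assumes "degree D < n" shows "Wm n D z 0 0 = poly D z"
proof -
  have "Wm n D z 0 0 = (\<Sum>t<n. coeff D t * z^t)" by (simp add: Wm_def)
  also have "\<dots> = (\<Sum>t\<le>degree D. coeff D t * z^t)"
    using assms by (intro sum.mono_neutral_right) (auto simp: coeff_eq_0)
  finally show ?thesis by (simp add: poly_altdef)
qed

lemma Wm_imp_order:
  assumes "D \<noteq> 0" "z \<noteq> 0" "degree D < n" "\<forall>a<m. Wm n D z 0 a = 0"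
  shows "m \<le> order z D"
  using assms
proof (induction m arbitrary: D)
  case 0 then show ?case by simp
next
  case (Suc m)
  have "poly D z = 0" using Suc.prems Wm_0_poly by fastforce
  then obtain E where E: "D = [:-z,1:] * E" "E \<noteq> 0" "order z D = Suc (order z E)" "degree D = Suc (degree E)"
    using order_factor Suc.prems(1) by blast
  have "Wm n E z 0 a = 0" if "a < m" for a
    using that
  proof (induction a rule: less_induct)
    case (less a)
    have "0 = Wm n D z 0 (Suc a)" using Suc.prems less by auto
    also have "\<dots> = z * (\<Sum>c<Suc a. of_nat (Suc a choose c) * Wm n E z 0 c)"
      using Wm_factor E Suc.prems by blast
    also have "\<dots> = z * (of_nat (Suc a) * Wm n E z 0 a)"
      using less by (simp add: sum.lessThan_Suc)
    finally show ?case using Suc.prems(2) by (simp del: of_nat_Suc)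
  qed
  then have "m \<le> order z E" using Suc.IH[of E] E Suc.prems by auto
  then show ?case using E by simp
qed

lemma sum_order_subset_le:
  fixes D :: "complex poly"
  assumes "D \<noteq> 0" "finite A"
  shows "(\<Sum>z\<in>A. order z D) \<le> degree D"
proof -
  have "(\<Sum>z\<in>A. order z D) = (\<Sum>z\<in>A \<inter> {x. poly D x = 0}. order z D)"
    using assms by (intro sum.mono_neutral_right) (auto simp: order_gt_0_iff)
  also have "\<dots> \<le> (\<Sum>z | poly D z = 0. order z D)"
    using assms by (intro sum_mono2) (auto simp: poly_roots_finite order_gt_0_iff)
  also have "\<dots> \<le> degree D" by (rule sum_order_le_degree[OF assms(1)])
  finally show ?thesis .
qed

lemma hermite_core:
  fixes d :: "nat \<Rightarrow> complex" and mz :: "complex \<Rightarrow> nat"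
  assumes A: "finite A" "0 \<notin> A" and n: "(\<Sum>z\<in>A. mz z) = n"
    and h: "\<forall>z\<in>A. \<forall>a<mz z. (\<Sum>t<n. d t * (of_nat t + s)^a * z^t) = 0"
  shows "\<forall>t<n. d t = 0"
proof -
  define D where "D = (\<Sum>t<n. monom (d t) t)"
  have cD: "coeff D t = (if t < n then d t else 0)" for t
    unfolding D_def coeff_sum coeff_monom by (simp add: sum.delta)
  show ?thesis
  proof (cases "D = 0")
    case True then show ?thesis using cD by (metis coeff_0)
  next
    case False
    have npos: "n > 0" using False D_def by (cases n) auto
    have deg: "degree D < n"
    proof -
      have "degree D \<le> n - 1" using cD by (intro degree_le) auto
      then show ?thesis using npos by simp
    qed
    have Wm_eq: "Wm n D z s a = (\<Sum>t<n. d t * (of_nat t + s)^a * z^t)" for z a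
      unfolding Wm_def using cD by (intro sum.cong) auto
    have "mz z \<le> order z D" if "z \<in> A" for z
    proof -
      have "\<forall>a<mz z. Wm n D z s a = 0" using h that Wm_eq by auto
      then have "\<forall>a<mz z. Wm n D z 0 a = 0" using Wm_shift by blast
      moreover have "z \<noteq> 0" using that A by auto
      ultimately show ?thesis using Wm_imp_order[OF False _ deg, of z "mz z"] by blast
    qed
    then have "n \<le> (\<Sum>z\<in>A. order z D)" unfolding n[symmetric] by (rule sum_mono)
    also have "\<dots> \<le> degree D" by (rule sum_order_subset_le[OF False A(1)])
    finally show ?thesis using deg by simp
  qed
qed

lemma sum_order_nonzero_roots:
  fixes D :: "complex poly"
  assumes "D \<noteq> 0"
  shows "(\<Sum>z\<in>{z. z \<noteq> 0 \<and> poly D z = 0}. order z D) = degree D - order 0 D"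
proof -
  have fin: "finite {z. poly D z = 0}" using assms poly_roots_finite by blast
  have "degree D = size (proots D)" by (simp add: size_proots_complex)
  also have "\<dots> = (\<Sum>z\<in>{z. poly D z = 0}. order z D)"
    using assms by (simp add: size_multiset_overloaded_eq)
  also have "\<dots> = (\<Sum>z\<in>{z. z \<noteq> 0 \<and> poly D z = 0}. order z D) + order 0 D"
  proof (cases "poly D 0 = 0")
    case True
    have "{z. poly D z = 0} = insert 0 {z. z \<noteq> 0 \<and> poly D z = 0}" using True by auto
    then show ?thesis using fin by (simp add: sum.insert)
  next
    case False
    then show ?thesis by (auto simp: order_0I intro!: sum.cong)
  qed
  finally show ?thesis by simp
qed


locale leap =
  fixes k :: nat and p q :: "nat \<Rightarrow> real"
  assumes k1: "k \<ge> 1"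
    and pnn: "\<And>j. 1 \<le> j \<Longrightarrow> j \<le> k \<Longrightarrow> p j \<ge> 0"
    and qnn: "\<And>j. 1 \<le> j \<Longrightarrow> j \<le> k \<Longrightarrow> q j \<ge> 0"
    and sum1: "(\<Sum>j = 1..k. p j + q j) = 1"
    and psum: "(\<Sum>j = 1..k. p j) > 0"
    and qsum: "(\<Sum>j = 1..k. q j) > 0"
begin

abbreviation "P \<equiv> kp k p"
abbreviation "K \<equiv> kq k q"
abbreviation "c \<equiv> chi_coeff k p q"

lemma max_facts:
  fixes f :: "nat \<Rightarrow> real"
  assumes nn: "\<And>j. 1 \<le> j \<Longrightarrow> j \<le> k \<Longrightarrow> f j \<ge> 0" and pos: "(\<Sum>j = 1..k. f j) > 0"
  defines "m \<equiv> Max {j. 1 \<le> j \<and> j \<le> k \<and> f j > 0}"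
  shows "1 \<le> m" "m \<le> k" "f m > 0" "\<And>l. m < l \<Longrightarrow> l \<le> k \<Longrightarrow> f l = 0"
proof -
  let ?S = "{j. 1 \<le> j \<and> j \<le> k \<and> f j > 0}"
  have fin: "finite ?S" by (rule finite_subset[of _ "{1..k}"]) auto
  have ne: "?S \<noteq> {}"
  proof
    assume "?S = {}"
    then have "\<forall>j\<in>{1..k}. f j \<le> 0" by auto
    then have "(\<Sum>j = 1..k. f j) \<le> 0" by (intro sum_nonpos) auto
    with pos show False by simp
  qed
  have "m \<in> ?S" unfolding m_def using fin ne by (rule Max_in)
  then show "1 \<le> m" "m \<le> k" "f m > 0" by auto
  fix l assume "m < l" "l \<le> k"
  have "f l \<le> 0"
  proof (rule ccontr)
    assume "\<not> f l \<le> 0"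
    then have "l \<in> ?S" using \<open>m < l\<close> \<open>l \<le> k\<close> by auto
    then have "l \<le> m" unfolding m_def by (rule Max_ge[OF fin])
    with \<open>m < l\<close> show False by simp
  qed
  moreover have "f l \<ge> 0" using nn \<open>m < l\<close> \<open>l \<le> k\<close> by simp
  ultimately show "f l = 0" by simp
qed

lemmas P_facts = max_facts[OF pnn psum, folded kp_def]
lemmas K_facts = max_facts[OF qnn qsum, folded kq_def]


lemma c_low: assumes "j < k - K" shows "c j = 0"
proof -
  have "(\<Sum>l = k - j..k. q l) = 0"
    using assms K_facts(4) by (intro sum.neutral) auto
  then show ?thesis unfolding chi_coeff_def using assms by simp
qed

lemma c_high: assumes "k + P \<le> j" shows "c j = 0"
proof (cases "j < 2 * k")
  case True
  have "(\<Sum>l = j + 1 - k..k. p l) = 0"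
    using assms P_facts(4) by (intro sum.neutral) auto
  then show ?thesis unfolding chi_coeff_def using assms True by simp
next
  case False then show ?thesis unfolding chi_coeff_def using assms by simp
qed

lemma c_at_low: "c (k - K) = - q K"
proof -
  have "(\<Sum>l = K..k. q l) = q K + (\<Sum>l = Suc K..k. q l)"
    using K_facts(2) by (simp add: sum.atLeast_Suc_atMost)
  also have "(\<Sum>l = Suc K..k. q l) = 0" using K_facts(4) by (intro sum.neutral) auto
  finally have s: "(\<Sum>l = K..k. q l) = q K" by simp
  have lt: "k - K < k" using K_facts(1,2) by simp
  have e: "k - (k - K) = K" using K_facts(2) by simp
  show ?thesis unfolding chi_coeff_def using lt by (simp only: if_True e s)
qed

lemma c_at_high: "c (k + P - 1) = p P"
proof -
  have "(\<Sum>l = P..k. p l) = p P + (\<Sum>l = Suc P..k. p l)"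
    using P_facts(2) by (simp add: sum.atLeast_Suc_atMost)
  also have "(\<Sum>l = Suc P..k. p l) = 0" using P_facts(4) by (intro sum.neutral) auto
  finally have s: "(\<Sum>l = P..k. p l) = p P" by simp
  have e: "k + P - 1 + 1 - k = P" using P_facts(1) by simp
  have lt: "\<not> k + P - 1 < k" "k + P - 1 < 2 * k" using P_facts(1,2) by auto
  show ?thesis unfolding chi_coeff_def using lt by (simp only: if_False if_True e s)
qed

lemma coeff_chi: "coeff (chi k p q) j = complex_of_real (c j)"
proof (cases "j < 2 * k")
  case True
  then show ?thesis unfolding chi_def coeff_Poly_eq by (simp add: nth_default_def)
next
  case False
  then have "c j = 0" unfolding chi_coeff_def by simp
  then show ?thesis using False unfolding chi_def coeff_Poly_eq by (simp add: nth_default_def)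
qed

lemma chi_ne0: "chi k p q \<noteq> 0"
proof
  assume "chi k p q = 0"
  moreover have "coeff (chi k p q) (k+P-1) = complex_of_real (p P)" by (simp only: coeff_chi c_at_high)
  ultimately show False using P_facts(3) by simp
qed

lemma degree_chi: "degree (chi k p q) = k + P - 1"
proof (rule antisym)
  show "degree (chi k p q) \<le> k + P - 1"
  proof (rule degree_le, intro allI impI)
    fix i assume "k + P - 1 < i"
    then have "k + P \<le> i" using P_facts(1) by simp
    then show "coeff (chi k p q) i = 0" by (simp add: coeff_chi c_high)
  qed
  have h: "coeff (chi k p q) (k+P-1) = complex_of_real (p P)" by (simp only: coeff_chi c_at_high)
  show "k + P - 1 \<le> degree (chi k p q)"
    by (rule le_degree) (use h P_facts(3) in simp)
qed

lemma order0_chi: "order 0 (chi k p q) = k - K"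
proof (rule antisym)
  have "monom 1 (k - K) dvd chi k p q"
    unfolding monom_1_dvd_iff' by (simp add: coeff_chi c_low)
  then show "k - K \<le> order 0 (chi k p q)" using monom_1_dvd_iff[OF chi_ne0] by blast
  show "order 0 (chi k p q) \<le> k - K"
  proof (rule ccontr)
    assume "\<not> order 0 (chi k p q) \<le> k - K"
    then have "monom 1 (Suc (k - K)) dvd chi k p q" using monom_1_dvd_iff[OF chi_ne0] by simp
    then have "coeff (chi k p q) (k - K) = 0" unfolding monom_1_dvd_iff' by simp
    moreover have "coeff (chi k p q) (k - K) = complex_of_real (- q K)" by (simp only: coeff_chi c_at_low)
    ultimately show False using K_facts(3) by simp
  qed
qed

lemma sum_orders_chi:
  "(\<Sum>z\<in>{z. z \<noteq> 0 \<and> poly (chi k p q) z = 0}. order z (chi k p q)) = P + K - 1"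
proof -
  have "k + P - 1 - (k - K) = P + K - 1" using P_facts(1,2) K_facts(1,2) by simp
  then show ?thesis unfolding sum_order_nonzero_roots[OF chi_ne0] degree_chi order0_chi .
qed

end


definition Lf :: "nat \<Rightarrow> (nat \<Rightarrow> real) \<Rightarrow> (nat \<Rightarrow> real) \<Rightarrow> (int \<Rightarrow> complex) \<Rightarrow> int \<Rightarrow> complex" where
  "Lf k p q Y i = (\<Sum>j<2*k. complex_of_real (chi_coeff k p q j) * Y (i + 1 + int j - int k))"

lemma sum_tri_swap:
  fixes f :: "nat \<Rightarrow> nat \<Rightarrow> 'a::comm_monoid_add"
  shows "(\<Sum>m<n. \<Sum>l\<in>{Suc m..n}. f m l) = (\<Sum>l\<in>{1..n}. \<Sum>m<l. f m l)"
proof (induction n)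
  case 0 then show ?case by simp
next
  case (Suc n)
  have "(\<Sum>m<Suc n. \<Sum>l\<in>{Suc m..Suc n}. f m l) = (\<Sum>m<Suc n. (\<Sum>l\<in>{Suc m..n}. f m l) + f m (Suc n))"
    by (intro sum.cong refl) (auto simp: sum.cl_ivl_Suc)
  also have "\<dots> = (\<Sum>m<n. \<Sum>l\<in>{Suc m..n}. f m l) + (\<Sum>m<Suc n. f m (Suc n))"
    by (simp add: sum.distrib)
  also have "\<dots> = (\<Sum>l\<in>{1..Suc n}. \<Sum>m<l. f m l)" using Suc by simp
  finally show ?case .
qed

lemma sum_lessThan_add_split:
  fixes F :: "nat \<Rightarrow> 'a::comm_monoid_add"
  shows "(\<Sum>j<a+b. F j) = (\<Sum>j<a. F j) + (\<Sum>m<b. F (a+m))"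
  by (induction b) (simp_all add: add.assoc)

context leap begin

lemma GI:
  fixes U :: "int \<Rightarrow> complex"
  shows "(\<Sum>l=1..k. complex_of_real (p l) * U (i + int l) + complex_of_real (q l) * U (i - int l)) - U i
         = Lf k p q (\<lambda>e. U e - U (e - 1)) i"
proof -
  let ?Y = "\<lambda>e. U e - U (e - 1)"
  let ?F = "\<lambda>j. complex_of_real (c j) * ?Y (i + 1 + int j - int k)"
  have "Lf k p q ?Y i = (\<Sum>j<k. ?F j) + (\<Sum>m<k. ?F (k+m))"
    unfolding Lf_def mult_2 by (rule sum_lessThan_add_split)
  also have "(\<Sum>m<k. ?F (k+m)) = (\<Sum>m<k. \<Sum>l\<in>{Suc m..k}. complex_of_real (p l) * (U (i + int (Suc m)) - U (i + int m)))"
  proof (intro sum.cong refl)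
    fix m assume "m \<in> {..<k}"
    then have cm: "c (k+m) = (\<Sum>l = Suc m..k. p l)" unfolding chi_coeff_def by auto
    have ix: "i + 1 + int (k+m) - int k = i + int (Suc m)" by simp
    show "?F (k+m) = (\<Sum>l\<in>{Suc m..k}. complex_of_real (p l) * (U (i + int (Suc m)) - U (i + int m)))"
      unfolding cm ix by (simp add: sum_distrib_right)
  qed
  also have "\<dots> = (\<Sum>l\<in>{1..k}. \<Sum>m<l. complex_of_real (p l) * (U (i + int (Suc m)) - U (i + int m)))"
    by (rule sum_tri_swap)
  also have "\<dots> = (\<Sum>l\<in>{1..k}. complex_of_real (p l) * (U (i + int l) - U i))"
  proof (intro sum.cong refl)
    fix l
    have "(\<Sum>m<l. U (i + int (Suc m)) - U (i + int m)) = U (i + int l) - U (i + int 0)"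
      by (rule sum_lessThan_telescope[of "\<lambda>n. U (i + int n)"])
    then show "(\<Sum>m<l. complex_of_real (p l) * (U (i + int (Suc m)) - U (i + int m))) = complex_of_real (p l) * (U (i + int l) - U i)"
      by (simp add: sum_distrib_left[symmetric])
  qed
  also have "(\<Sum>j<k. ?F j) = (\<Sum>m<k. ?F (k - Suc m))"
    by (rule sum.nat_diff_reindex[symmetric])
  also have "\<dots> = (\<Sum>m<k. \<Sum>l\<in>{Suc m..k}. - complex_of_real (q l) * (U (i - int m) - U (i - int (Suc m))))"
  proof (intro sum.cong refl)
    fix m assume "m \<in> {..<k}"
    then have lt: "k - Suc m < k" and e: "k - (k - Suc m) = Suc m" by auto
    have cm: "c (k - Suc m) = - (\<Sum>l = Suc m..k. q l)" unfolding chi_coeff_def using lt e by simp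
    have ix: "i + 1 + int (k - Suc m) - int k = i - int m" using \<open>m \<in> {..<k}\<close> by auto
    have ix2: "i - int m - 1 = i - int (Suc m)" by simp
    show "?F (k - Suc m) = (\<Sum>l\<in>{Suc m..k}. - complex_of_real (q l) * (U (i - int m) - U (i - int (Suc m))))"
      unfolding cm ix ix2 by (simp add: sum_distrib_right sum_negf)
  qed
  also have "\<dots> = (\<Sum>l\<in>{1..k}. \<Sum>m<l. - complex_of_real (q l) * (U (i - int m) - U (i - int (Suc m))))"
    by (rule sum_tri_swap)
  also have "\<dots> = (\<Sum>l\<in>{1..k}. complex_of_real (q l) * (U (i - int l) - U i))"
  proof (intro sum.cong refl)
    fix l
    have "(\<Sum>m<l. U (i - int m) - U (i - int (Suc m))) = U (i - int 0) - U (i - int l)"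
      by (rule sum_lessThan_telescope'[of "\<lambda>n. U (i - int n)"])
    then have "(\<Sum>m<l. - complex_of_real (q l) * (U (i - int m) - U (i - int (Suc m))))
           = - complex_of_real (q l) * (U i - U (i - int l))"
      by (subst sum_distrib_left[symmetric]) simp
    then show "(\<Sum>m<l. - complex_of_real (q l) * (U (i - int m) - U (i - int (Suc m)))) = complex_of_real (q l) * (U (i - int l) - U i)"
      by (simp add: algebra_simps)
  qed
  finally have "Lf k p q ?Y i = (\<Sum>l\<in>{1..k}. complex_of_real (q l) * (U (i - int l) - U i))
      + (\<Sum>l\<in>{1..k}. complex_of_real (p l) * (U (i + int l) - U i))" .
  also have "\<dots> = (\<Sum>l=1..k. complex_of_real (p l) * U (i + int l) + complex_of_real (q l) * U (i - int l))
       - (\<Sum>l=1..k. complex_of_real (p l + q l)) * U i"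
    by (simp add: sum.distrib sum_subtractf algebra_simps sum_distrib_right sum_distrib_left)
  also have "(\<Sum>l=1..k. complex_of_real (p l + q l)) = 1"
    using sum1 by (metis of_real_1 of_real_sum)
  finally show ?thesis by simp
qed

lemma Lf_add: "Lf k p q (\<lambda>e. F e + G e) i = Lf k p q F i + Lf k p q G i"
  unfolding Lf_def by (simp add: sum.distrib algebra_simps)

lemma Lf_scale: "Lf k p q (\<lambda>e. a * F e) i = a * Lf k p q F i"
  unfolding Lf_def by (simp add: sum_distrib_left algebra_simps)

lemma Lf_sum: "Lf k p q (\<lambda>e. \<Sum>x\<in>A. F x e) i = (\<Sum>x\<in>A. Lf k p q (F x) i)"
  unfolding Lf_def by (simp add: sum_distrib_left sum.swap[of _ A])

lemma Lf_cong: "(\<And>j. j < 2*k \<Longrightarrow> F (i + 1 + int j - int k) = G (i + 1 + int j - int k)) \<Longrightarrow> Lf k p q F i = Lf k p q G i"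
  unfolding Lf_def by (intro sum.cong) auto

lemma Lf_one: "Lf k p q (\<lambda>e. 1) i = complex_of_real (drift k p q)"
proof -
  have "Lf k p q (\<lambda>e. 1) i = Lf k p q (\<lambda>e. complex_of_int e - complex_of_int (e - 1)) i" by simp
  also have "\<dots> = (\<Sum>l=1..k. complex_of_real (p l) * complex_of_int (i + int l) + complex_of_real (q l) * complex_of_int (i - int l)) - complex_of_int i"
    by (rule GI[symmetric])
  also have "(\<Sum>l=1..k. complex_of_real (p l) * complex_of_int (i + int l) + complex_of_real (q l) * complex_of_int (i - int l))
      = (\<Sum>l=1..k. complex_of_int i * complex_of_real (p l + q l) + of_nat l * complex_of_real (p l - q l))"
    by (rule sum.cong) (simp_all add: algebra_simps)
  also have "\<dots> = complex_of_int i * (\<Sum>l=1..k. complex_of_real (p l + q l)) + (\<Sum>l=1..k. of_nat l * complex_of_real (p l - q l))"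
    by (simp only: sum.distrib sum_distrib_left)
  also have "(\<Sum>l=1..k. complex_of_real (p l + q l)) = 1"
    using sum1 by (metis of_real_1 of_real_sum)
  also have "(\<Sum>l=1..k. of_nat l * complex_of_real (p l - q l)) = complex_of_real (drift k p q)"
    unfolding drift_def by simp
  finally show ?thesis by simp
qed

abbreviation "S2 \<equiv> (\<Sum>j = 1..k. (real j)\<^sup>2 * (p j + q j))"

lemma Lf_lin: "Lf k p q (\<lambda>e. 2 * complex_of_int e - 1) i = 2 * complex_of_int i * complex_of_real (drift k p q) + complex_of_real S2"
proof -
  have "Lf k p q (\<lambda>e. 2 * complex_of_int e - 1) i = Lf k p q (\<lambda>e. (complex_of_int e)^2 - (complex_of_int (e - 1))^2) i"
    by (simp add: power2_eq_square algebra_simps)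
  also have "\<dots> = (\<Sum>l=1..k. complex_of_real (p l) * (complex_of_int (i + int l))^2 + complex_of_real (q l) * (complex_of_int (i - int l))^2) - (complex_of_int i)^2"
    by (rule GI[symmetric])
  also have "(\<Sum>l=1..k. complex_of_real (p l) * (complex_of_int (i + int l))^2 + complex_of_real (q l) * (complex_of_int (i - int l))^2)
     = (\<Sum>l=1..k. (complex_of_int i)^2 * complex_of_real (p l + q l)
      + 2 * complex_of_int i * (of_nat l * complex_of_real (p l - q l))
      + (of_nat l)^2 * complex_of_real (p l + q l))"
    by (rule sum.cong) (simp_all add: algebra_simps power2_eq_square)
  also have "\<dots> = (complex_of_int i)^2 * (\<Sum>l=1..k. complex_of_real (p l + q l))
      + 2 * complex_of_int i * (\<Sum>l=1..k. of_nat l * complex_of_real (p l - q l))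
      + (\<Sum>l=1..k. (of_nat l)^2 * complex_of_real (p l + q l))"
    by (simp only: sum.distrib sum_distrib_left)
  also have "(\<Sum>l=1..k. complex_of_real (p l + q l)) = 1"
    using sum1 by (metis of_real_1 of_real_sum)
  also have "(\<Sum>l=1..k. of_nat l * complex_of_real (p l - q l)) = complex_of_real (drift k p q)"
    unfolding drift_def by simp
  also have "(\<Sum>l=1..k. (of_nat l)^2 * complex_of_real (p l + q l)) = complex_of_real S2"
    by simp
  finally show ?thesis by simp
qed

lemma S2_pos: "S2 > 0"
proof -
  have "(\<Sum>j = 1..k. p j + q j) \<le> S2"
  proof (intro sum_mono)
    fix j assume j: "j \<in> {1..k}"
    have "1 \<le> (real j)^2" using j by simp
    moreover have "0 \<le> p j + q j" using pnn qnn j by (simp add: add_nonneg_nonneg)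
    ultimately show "p j + q j \<le> (real j)\<^sup>2 * (p j + q j)"
      using mult_right_mono[of 1 "(real j)^2" "p j + q j"] by simp
  qed
  then show ?thesis using sum1 by simp
qed

lemma Lf_delta: "Lf k p q (\<lambda>e. delta_entry (drift k p q) (variance_xi k p q) e) i = -1"
proof (cases "drift k p q = 0")
  case False
  have "Lf k p q (\<lambda>e. delta_entry (drift k p q) (variance_xi k p q) e) i
      = Lf k p q (\<lambda>e. complex_of_real (- 1 / drift k p q) * 1) i"
    unfolding delta_entry_def using False by simp
  also have "\<dots> = complex_of_real (- 1 / drift k p q) * complex_of_real (drift k p q)"
    by (simp only: Lf_scale Lf_one)
  finally show ?thesis using False by (simp flip: of_real_mult)
next
  case True
  have v: "variance_xi k p q = S2" unfolding variance_xi_def using True by simp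
  have "Lf k p q (\<lambda>e. delta_entry (drift k p q) (variance_xi k p q) e) i
      = Lf k p q (\<lambda>e. complex_of_real (- 1 / S2) * (2 * complex_of_int e - 1) + complex_of_real (- 1 / S2) * 1) i"
  proof (intro arg_cong[where f="\<lambda>F. Lf k p q F i"] ext)
    fix e
    have "- 2 * real_of_int e / S2 = 2 * real_of_int e * (- 1 / S2)" by simp
    then have "complex_of_real (- 2 * real_of_int e / S2) = 2 * complex_of_int e * complex_of_real (- 1 / S2)"
      by simp
    moreover have "delta_entry (drift k p q) (variance_xi k p q) e = complex_of_real (- 2 * real_of_int e / S2)"
      unfolding delta_entry_def v using True by simp
    moreover have "\<And>a x::complex. 2 * x * a = a * (2 * x - 1) + a * 1" by (simp add: algebra_simps)
    ultimately show "delta_entry (drift k p q) (variance_xi k p q) e = complex_of_real (- 1 / S2) * (2 * complex_of_int e - 1) + complex_of_real (- 1 / S2) * 1"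
      by metis
  qed
  also have "\<dots> = complex_of_real (- 1 / S2) * complex_of_real S2"
    by (simp only: Lf_add Lf_scale Lf_one Lf_lin True) simp
  also have "\<dots> = complex_of_real ((- 1 / S2) * S2)" by (rule of_real_mult[symmetric])
  also have "(- 1 / S2) * S2 = -1" using S2_pos by simp
  finally show ?thesis by simp
qed

definition Zcolfun :: "complex \<Rightarrow> nat \<Rightarrow> int \<Rightarrow> complex" where
  "Zcolfun z l e = complex_of_int e ^ (l - 1) * z powi e"

lemma Lf_Zcol:
  assumes z: "z \<noteq> 0" and l: "1 \<le> l" "l \<le> order z (chi k p q)"
  shows "Lf k p q (Zcolfun z l) i = 0"
proof -
  define s0 where "s0 = i + 1 - int k"
  have deg: "degree (chi k p q) < 2 * k" using degree_chi P_facts(1,2) by simp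
  have "Lf k p q (Zcolfun z l) i = (\<Sum>j<2*k. z powi s0 * (coeff (chi k p q) j * (of_nat j + of_int s0) ^ (l - 1) * z ^ j))"
    unfolding Lf_def Zcolfun_def
  proof (intro sum.cong refl)
    fix j
    have e: "i + 1 + int j - int k = s0 + int j" unfolding s0_def by simp
    have "z powi (s0 + int j) = z powi s0 * z ^ j" using z by (simp add: power_int_add)
    then show "complex_of_real (c j) * (complex_of_int (i + 1 + int j - int k) ^ (l - 1) * z powi (i + 1 + int j - int k)) =
         z powi s0 * (coeff (chi k p q) j * (of_nat j + of_int s0) ^ (l - 1) * z ^ j)"
      unfolding e coeff_chi by (simp add: algebra_simps)
  qed
  also have "\<dots> = z powi s0 * Wm (2*k) (chi k p q) z (of_int s0) (l - 1)"
    unfolding Wm_def by (simp add: sum_distrib_left)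
  also have "Wm (2*k) (chi k p q) z (of_int s0) (l - 1) = 0"
  proof -
    have "\<forall>a<order z (chi k p q). Wm (2*k) (chi k p q) z 0 a = 0"
      using Wm_order_imp[OF chi_ne0 deg order_refl] by blast
    then show ?thesis using Wm_shift[of "order z (chi k p q)" "2*k" "chi k p q" z 0 "l-1" "of_int s0"] l by simp
  qed
  finally show ?thesis by simp
qed

end


lemma sum_sym_int:
  fixes g :: "int \<Rightarrow> 'a::comm_monoid_add"
  shows "(\<Sum>x\<in>{-int n..int n}. g x) = g 0 + (\<Sum>l=1..n. g (int l) + g (- int l))"
proof (induction n)
  case 0 then show ?case by simp
next
  case (Suc n)
  have e: "{-int (Suc n)..int (Suc n)} = insert (int (Suc n)) (insert (- int (Suc n)) {-int n..int n})"
    by auto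
  have "(\<Sum>x\<in>{-int (Suc n)..int (Suc n)}. g x) = g (int (Suc n)) + (g (- int (Suc n)) + (\<Sum>x\<in>{-int n..int n}. g x))"
    unfolding e by (subst sum.insert; simp)+
  also have "\<dots> = g 0 + (\<Sum>l=1..Suc n. g (int l) + g (- int l))"
    using Suc by (simp add: algebra_simps)
  finally show ?case .
qed

context leap begin

definition ff :: "int \<Rightarrow> real" where
  "ff x = (if 1 \<le> x \<and> x \<le> int k then p (nat x)
           else if - int k \<le> x \<and> x \<le> -1 then q (nat (- x)) else 0)"

lemma ff_nonneg: "0 \<le> ff x"
  unfolding ff_def using pnn qnn by auto

lemma ff_zero: "x \<notin> {-int k..int k} \<Longrightarrow> ff x = 0"
  unfolding ff_def by auto

lemma ff_sum_gen:
  fixes h :: "int \<Rightarrow> 'a::real_algebra_1"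
  shows "(\<Sum>x\<in>{-int k..int k}. of_real (ff x) * h x) = (\<Sum>l=1..k. of_real (p l) * h (int l) + of_real (q l) * h (- int l))"
proof -
  have "(\<Sum>x\<in>{-int k..int k}. of_real (ff x) * h x) = of_real (ff 0) * h 0 + (\<Sum>l=1..k. of_real (ff (int l)) * h (int l) + of_real (ff (- int l)) * h (- int l))"
    by (rule sum_sym_int)
  also have "\<dots> = (\<Sum>l=1..k. of_real (p l) * h (int l) + of_real (q l) * h (- int l))"
    by (auto simp: ff_def intro!: sum.cong)
  finally show ?thesis .
qed

lemma ff_sum_ennreal:
  fixes h :: "int \<Rightarrow> ennreal"
  shows "(\<Sum>x\<in>{-int k..int k}. ennreal (ff x) * h x) = (\<Sum>l=1..k. ennreal (p l) * h (int l) + ennreal (q l) * h (- int l))"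
proof -
  have "(\<Sum>x\<in>{-int k..int k}. ennreal (ff x) * h x) = ennreal (ff 0) * h 0 + (\<Sum>l=1..k. ennreal (ff (int l)) * h (int l) + ennreal (ff (- int l)) * h (- int l))"
    by (rule sum_sym_int)
  also have "\<dots> = (\<Sum>l=1..k. ennreal (p l) * h (int l) + ennreal (q l) * h (- int l))"
    by (auto simp: ff_def intro!: sum.cong)
  finally show ?thesis .
qed

lemma ff_prob: "(\<integral>\<^sup>+x. ennreal (ff x) \<partial>count_space UNIV) = 1"
proof -
  have "(\<integral>\<^sup>+x. ennreal (ff x) \<partial>count_space UNIV) = (\<Sum>x\<in>{-int k..int k}. ennreal (ff x))"
    by (rule nn_integral_count_space') (auto simp: ff_zero)
  also have "\<dots> = ennreal (\<Sum>x\<in>{-int k..int k}. ff x)"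
    using ff_nonneg by (simp add: sum_ennreal)
  also have "(\<Sum>x\<in>{-int k..int k}. ff x) = (\<Sum>x\<in>{-int k..int k}. of_real (ff x) * (1::real))" by simp
  also have "\<dots> = (\<Sum>l=1..k. p l + q l)" unfolding ff_sum_gen by simp
  finally show ?thesis using sum1 by simp
qed

lemma xi_eq: "xi_pmf k p q = embed_pmf ff"
  unfolding xi_pmf_def ff_def ..

lemma pmf_xi: "pmf (xi_pmf k p q) x = ff x"
  unfolding xi_eq using pmf_embed_pmf[OF ff_nonneg ff_prob] .

lemma set_xi: "set_pmf (xi_pmf k p q) \<subseteq> {-int k..int k}"
proof
  fix x assume "x \<in> set_pmf (xi_pmf k p q)"
  then have "ff x \<noteq> 0" by (simp add: set_pmf_eq pmf_xi)
  then show "x \<in> {-int k..int k}" using ff_zero by blast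
qed

lemma xi_nn_integral:
  fixes h :: "int \<Rightarrow> ennreal"
  shows "(\<integral>\<^sup>+x. h x \<partial>measure_pmf (xi_pmf k p q)) = (\<Sum>l=1..k. ennreal (p l) * h (int l) + ennreal (q l) * h (- int l))"
proof -
  have "(\<integral>\<^sup>+x. h x \<partial>measure_pmf (xi_pmf k p q)) = (\<Sum>x\<in>{-int k..int k}. h x * pmf (xi_pmf k p q) x)"
    by (rule nn_integral_measure_pmf_support) (use set_xi in auto)
  also have "\<dots> = (\<Sum>x\<in>{-int k..int k}. ennreal (ff x) * h x)"
    by (simp add: pmf_xi mult.commute)
  finally show ?thesis unfolding ff_sum_ennreal .
qed

lemma lp_nonempty: "xs \<in> set_pmf (leap_paths k p q N i n) \<Longrightarrow> xs \<noteq> []"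
  by (induction n arbitrary: xs) auto

lemma lp_first:
  "leap_paths k p q N i (Suc n) = bind_pmf (leap_step k p q N i) (\<lambda>j. map_pmf (\<lambda>xs. i # xs) (leap_paths k p q N j n))"
proof (induction n)
  case 0
  show ?case by (simp add: bind_return_pmf map_pmf_def bind_assoc_pmf)
next
  case (Suc n)
  have "leap_paths k p q N i (Suc (Suc n)) = bind_pmf (leap_paths k p q N i (Suc n))
       (\<lambda>xs. map_pmf (\<lambda>j. xs @ [j]) (leap_step k p q N (last xs)))" by simp
  also have "\<dots> = bind_pmf (leap_step k p q N i) (\<lambda>j. bind_pmf (leap_paths k p q N j n)
       (\<lambda>ys. map_pmf (\<lambda>j'. (i # ys) @ [j']) (leap_step k p q N (last (i # ys)))))"
    unfolding Suc by (simp add: bind_assoc_pmf bind_map_pmf)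
  also have "\<dots> = bind_pmf (leap_step k p q N i) (\<lambda>j. bind_pmf (leap_paths k p q N j n)
       (\<lambda>ys. map_pmf (\<lambda>xs. i # xs) (map_pmf (\<lambda>j'. ys @ [j']) (leap_step k p q N (last ys)))))"
    by (intro bind_pmf_cong refl) (auto dest: lp_nonempty simp: map_pmf_comp)
  also have "\<dots> = bind_pmf (leap_step k p q N i) (\<lambda>j. map_pmf (\<lambda>xs. i # xs) (leap_paths k p q N j (Suc n)))"
    by (simp add: map_bind_pmf)
  finally show ?case .
qed

definition Avoid :: "nat \<Rightarrow> nat list set" where
  "Avoid N = {xs. \<forall>x\<in>set xs. x \<noteq> 0 \<and> x \<noteq> N}"

lemma tail_def': "tail_prob k p q N i n = measure_pmf.prob (leap_paths k p q N i n) (Avoid N)"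
  unfolding tail_prob_def Avoid_def ..

lemma tail_nonneg: "0 \<le> tail_prob k p q N i n"
  by (simp add: tail_prob_def)

lemma tail_le1: "tail_prob k p q N i n \<le> 1"
  by (simp add: tail_prob_def)

lemma tail0: "tail_prob k p q N i 0 = (if i \<noteq> 0 \<and> i \<noteq> N then 1 else 0)"
  unfolding tail_def' by (simp add: Avoid_def)

lemma tail_Suc_enn:
  assumes "i \<le> N"
  shows "ennreal (tail_prob k p q N i (Suc n)) =
    (if 0 < i \<and> i < N then (\<Sum>l=1..k. ennreal (p l) * ennreal (tail_prob k p q N (clampN N (int i + int l)) n)
        + ennreal (q l) * ennreal (tail_prob k p q N (clampN N (int i - int l)) n)) else 0)"
proof -
  have pre: "(\<lambda>xs. i # xs) -` Avoid N = (if i \<noteq> 0 \<and> i \<noteq> N then Avoid N else {})"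
    by (auto simp: Avoid_def)
  have "ennreal (tail_prob k p q N i (Suc n)) = emeasure (measure_pmf (leap_paths k p q N i (Suc n))) (Avoid N)"
    unfolding tail_def' by (simp add: measure_pmf.emeasure_eq_measure)
  also have "\<dots> = (\<integral>\<^sup>+j. emeasure (measure_pmf (leap_paths k p q N j n)) ((\<lambda>xs. i # xs) -` Avoid N) \<partial>measure_pmf (leap_step k p q N i))"
    unfolding lp_first by simp
  finally have *: "ennreal (tail_prob k p q N i (Suc n)) = \<dots>" .
  show ?thesis
  proof (cases "0 < i \<and> i < N")
    case True
    then have "ennreal (tail_prob k p q N i (Suc n)) = (\<integral>\<^sup>+j. ennreal (tail_prob k p q N j n) \<partial>measure_pmf (leap_step k p q N i))"
      unfolding * pre by (simp add: tail_def' measure_pmf.emeasure_eq_measure)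
    also have "\<dots> = (\<integral>\<^sup>+x. ennreal (tail_prob k p q N (clampN N (int i + x)) n) \<partial>measure_pmf (xi_pmf k p q))"
      using True by (simp add: leap_step_def)
    also have "\<dots> = (\<Sum>l=1..k. ennreal (p l) * ennreal (tail_prob k p q N (clampN N (int i + int l)) n)
        + ennreal (q l) * ennreal (tail_prob k p q N (clampN N (int i - int l)) n))"
      by (subst xi_nn_integral) simp
    finally show ?thesis using True by simp
  next
    case False
    then have "i = 0 \<or> i = N" using assms by auto
    then show ?thesis unfolding * pre using False by auto
  qed
qed

lemma tail_Suc:
  assumes "i \<le> N"
  shows "tail_prob k p q N i (Suc n) =
    (if 0 < i \<and> i < N then (\<Sum>l=1..k. p l * tail_prob k p q N (clampN N (int i + int l)) n
        + q l * tail_prob k p q N (clampN N (int i - int l)) n) else 0)"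
proof -
  have nn: "\<And>l. l \<in> {1..k} \<Longrightarrow> 0 \<le> p l * tail_prob k p q N (clampN N (int i + int l)) n
        + q l * tail_prob k p q N (clampN N (int i - int l)) n"
    using pnn qnn tail_nonneg by (auto intro!: add_nonneg_nonneg mult_nonneg_nonneg)
  have "ennreal (tail_prob k p q N i (Suc n)) = ennreal
    (if 0 < i \<and> i < N then (\<Sum>l=1..k. p l * tail_prob k p q N (clampN N (int i + int l)) n
        + q l * tail_prob k p q N (clampN N (int i - int l)) n) else 0)"
  proof -
    have "(\<Sum>l=1..k. ennreal (p l) * ennreal (tail_prob k p q N (clampN N (int i + int l)) n)
        + ennreal (q l) * ennreal (tail_prob k p q N (clampN N (int i - int l)) n))
      = (\<Sum>l=1..k. ennreal (p l * tail_prob k p q N (clampN N (int i + int l)) n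
        + q l * tail_prob k p q N (clampN N (int i - int l)) n))"
      using pnn qnn tail_nonneg by (intro sum.cong refl) (simp add: ennreal_mult ennreal_plus)
    also have "\<dots> = ennreal (\<Sum>l=1..k. p l * tail_prob k p q N (clampN N (int i + int l)) n
        + q l * tail_prob k p q N (clampN N (int i - int l)) n)"
      using nn by (rule sum_ennreal)
    finally show ?thesis unfolding tail_Suc_enn[OF assms] by simp
  qed
  moreover have "0 \<le> (if 0 < i \<and> i < N then (\<Sum>l=1..k. p l * tail_prob k p q N (clampN N (int i + int l)) n
        + q l * tail_prob k p q N (clampN N (int i - int l)) n) else 0)"
    using nn by (auto intro: sum_nonneg)
  ultimately show ?thesis using tail_nonneg by simp
qed

end


locale leapN = leap +
  fixes N :: nat
  assumes NPK: "kp k p + kq k q \<le> N"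
begin

abbreviation "t \<equiv> tail_prob k p q N"

lemma N_pos: "0 < N" using NPK P_facts(1) by simp

lemma clamp_le: "clampN N x \<le> N" unfolding clampN_def by auto

lemma pP_le1: "p P \<le> 1"
proof -
  have "p P \<le> p P + q P" using qnn P_facts(1,2) by simp
  also have "\<dots> \<le> (\<Sum>j=1..k. p j + q j)"
    using P_facts(1,2) pnn qnn by (intro member_le_sum) (auto intro: add_nonneg_nonneg)
  finally show ?thesis using sum1 by simp
qed

lemma tail_bnd:
  assumes B: "\<forall>j\<le>N. t j n \<le> B" "0 \<le> B"
  shows "i \<le> N \<Longrightarrow> t i (n + m) \<le> B"
proof (induction m arbitrary: i)
  case 0 then show ?case using B by simp
next
  case (Suc m)
  show ?case
  proof (cases "0 < i \<and> i < N")
    case True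
    have "t i (n + Suc m) = (\<Sum>l=1..k. p l * t (clampN N (int i + int l)) (n+m) + q l * t (clampN N (int i - int l)) (n+m))"
      using tail_Suc[OF Suc.prems] True by simp
    also have "\<dots> \<le> (\<Sum>l=1..k. p l * B + q l * B)"
      using Suc.IH[OF clamp_le] pnn qnn by (intro sum_mono add_mono mult_left_mono) auto
    also have "\<dots> = (\<Sum>l=1..k. p l + q l) * B" by (subst sum_distrib_right) (simp add: distrib_right)
    also have "\<dots> = B" using sum1 by simp
    finally show ?thesis .
  next
    case False
    then show ?thesis using tail_Suc[OF Suc.prems] B by auto
  qed
qed

lemma tailN: "t N n = 0"
  by (cases n) (simp_all add: tail0 tail_Suc)

lemma decay:
  assumes B: "\<forall>j\<le>N. t j n \<le> B" "0 \<le> B"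
  shows "i \<le> N \<Longrightarrow> N \<le> i + m * P \<Longrightarrow> t i (n + m) \<le> B * (1 - p P ^ m)"
proof (induction m arbitrary: i)
  case 0
  then have "i = N" by simp
  then show ?case using tailN by simp
next
  case (Suc m)
  have pm: "p P ^ m \<le> 1" "0 \<le> p P ^ m" using pP_le1 P_facts(3) by (auto intro: power_le_one)
  show ?case
  proof (cases "0 < i \<and> i < N")
    case True
    define g where "g l = (if l = P then B * p P ^ m else 0)" for l
    have X: "t (clampN N (int i + int l)) (n+m) \<le> B - g l" if "l \<in> {1..k}" for l
    proof (cases "l = P")
      case True
      define j where "j = clampN N (int i + int P)"
      have j: "j \<le> N" "N \<le> j + m * P"
      proof -
        show "j \<le> N" unfolding j_def by (rule clamp_le)
        show "N \<le> j + m * P"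
        proof (cases "int i + int P \<ge> int N")
          case True then show ?thesis unfolding j_def clampN_def by auto
        next
          case False
          then have "j = i + P" unfolding j_def clampN_def using \<open>0 < i \<and> i < N\<close> by auto
          then show ?thesis using Suc.prems(2) by (simp add: algebra_simps)
        qed
      qed
      have "t j (n+m) \<le> B * (1 - p P ^ m)" by (rule Suc.IH[OF j])
      then show ?thesis using True unfolding g_def j_def by (simp add: algebra_simps)
    next
      case False
      then show ?thesis unfolding g_def using tail_bnd[OF B clamp_le] by simp
    qed
    have "t i (n + Suc m) = (\<Sum>l=1..k. p l * t (clampN N (int i + int l)) (n+m) + q l * t (clampN N (int i - int l)) (n+m))"
      using tail_Suc[OF Suc.prems(1)] True by simp
    also have "\<dots> \<le> (\<Sum>l=1..k. p l * (B - g l) + q l * B)"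
      using X tail_bnd[OF B clamp_le] pnn qnn by (intro sum_mono add_mono mult_left_mono) auto
    also have "\<dots> = (\<Sum>l=1..k. (p l + q l) * B) - (\<Sum>l=1..k. p l * g l)"
      by (simp add: sum_subtractf[symmetric] algebra_simps)
    also have "(\<Sum>l=1..k. p l * g l) = p P * (B * p P ^ m)"
    proof -
      have "(\<Sum>l=1..k. p l * g l) = (\<Sum>l=1..k. if l = P then p P * (B * p P ^ m) else 0)"
        by (rule sum.cong) (auto simp: g_def)
      also have "\<dots> = p P * (B * p P ^ m)" using P_facts(1,2) by (simp add: sum.delta')
      finally show ?thesis .
    qed
    also have "(\<Sum>l=1..k. (p l + q l) * B) = (\<Sum>l=1..k. p l + q l) * B" by (simp add: sum_distrib_right)
    also have "\<dots> = B" using sum1 by simp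
    finally show ?thesis by (simp add: algebra_simps)
  next
    case False
    then have "t i (n + Suc m) = 0" using tail_Suc[OF Suc.prems(1), of "n+m"] by auto
    moreover have "0 \<le> B * (1 - p P ^ Suc m)"
    proof -
      have "p P ^ Suc m \<le> 1" using pP_le1 P_facts(3) by (intro power_le_one) auto
      then show ?thesis using B by (intro mult_nonneg_nonneg) auto
    qed
    ultimately show ?thesis by simp
  qed
qed

definition "eps = p P ^ N"
definition "theta = 1 - eps / 2"

lemma eps_bounds: "0 < eps" "eps \<le> 1"
  unfolding eps_def using P_facts(3) pP_le1 by (auto intro: power_le_one)

lemma theta_bounds: "0 < theta" "theta < 1"
  unfolding theta_def using eps_bounds by auto

lemma tail_geom: "\<forall>i\<le>N. t i (r * N) \<le> theta ^ r"
proof (induction r)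
  case 0 then show ?case using tail_le1 by simp
next
  case (Suc r)
  have B: "\<forall>j\<le>N. t j (r*N) \<le> theta ^ r" "0 \<le> theta ^ r" using Suc theta_bounds by auto
  show ?case
  proof (intro allI impI)
    fix i assume i: "i \<le> N"
    have "N \<le> i + N * P" using P_facts(1) by (metis le_add2 mult.right_neutral mult_le_mono2 order_trans)
    then have "t i (r*N + N) \<le> theta ^ r * (1 - eps)" unfolding eps_def by (rule decay[OF B i])
    also have "\<dots> \<le> theta ^ r * theta"
      using theta_bounds eps_bounds unfolding theta_def by (intro mult_left_mono) auto
    finally show "t i (Suc r * N) \<le> theta ^ Suc r" by (simp add: algebra_simps)
  qed
qed

lemma tail_div: "i \<le> N \<Longrightarrow> t i n \<le> theta ^ (n div N)"
proof -
  assume i: "i \<le> N"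
  have "n = (n div N) * N + n mod N" by simp
  then have "t i n = t i ((n div N) * N + n mod N)" by simp
  also have "\<dots> \<le> theta ^ (n div N)"
  proof -
    have B: "\<forall>j\<le>N. t j ((n div N) * N) \<le> theta ^ (n div N)" by (rule tail_geom)
    have "0 \<le> theta ^ (n div N)" using theta_bounds by simp
    then show ?thesis using tail_bnd[OF B _ i] by blast
  qed
  finally show ?thesis .
qed

definition "rho = root N theta"

lemma rho_bounds: "0 < rho" "rho < 1" "rho ^ N = theta"
  unfolding rho_def using theta_bounds N_pos by (auto simp: real_root_pow_pos)

lemma tail_rho: "i \<le> N \<Longrightarrow> t i n \<le> rho ^ n / theta"
proof -
  assume i: "i \<le> N"
  have "theta ^ (n div N) * theta \<le> rho ^ n"
  proof -
    have "rho ^ n = rho ^ (N * (n div N)) * rho ^ (n mod N)"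
      by (metis div_mult_mod_eq mult.commute power_add)
    also have "rho ^ (N * (n div N)) = theta ^ (n div N)" by (simp add: power_mult rho_bounds(3))
    also have "rho ^ (n mod N) \<ge> rho ^ N"
      using rho_bounds N_pos by (intro power_decreasing) auto
    then have "theta ^ (n div N) * rho ^ (n mod N) \<ge> theta ^ (n div N) * theta"
      using rho_bounds theta_bounds by (intro mult_left_mono) auto
    finally show ?thesis by simp
  qed
  then have "theta ^ (n div N) \<le> rho ^ n / theta" using theta_bounds by (simp add: field_simps)
  then show ?thesis using tail_div[OF i, of n] by linarith
qed

lemma tail_summable: "i \<le> N \<Longrightarrow> summable (t i)"
proof -
  assume i: "i \<le> N"
  have "summable (\<lambda>n. (1 / theta) * rho ^ n)"
    using rho_bounds by (intro summable_mult summable_geometric) auto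
  moreover have "norm (t i n) \<le> (1 / theta) * rho ^ n" for n
    using tail_rho[OF i, of n] tail_nonneg by simp
  ultimately show ?thesis by (rule summable_comparison_test'[where N=0])
qed

end


context leapN begin

definition Ev :: "nat \<Rightarrow> real" where "Ev i = (\<Sum>n. t i n)"

lemma expected_eq: "i \<le> N \<Longrightarrow> expected_absorption k p q N i = ennreal (Ev i)"
  unfolding expected_absorption_def Ev_def
  using tail_nonneg tail_summable by (intro suminf_ennreal2) auto

lemma Ev_nonneg: "i \<le> N \<Longrightarrow> 0 \<le> Ev i"
  unfolding Ev_def by (intro suminf_nonneg tail_summable) (auto simp: tail_nonneg)
 
lemma tail_bd_zero: "i = 0 \<or> i = N \<Longrightarrow> t i n = 0"
  by (cases n) (auto simp: tail0 tail_Suc)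

lemma Ev_bd: "i = 0 \<or> i = N \<Longrightarrow> Ev i = 0"
proof -
  assume "i = 0 \<or> i = N"
  then have "t i = (\<lambda>n. 0)" using tail_bd_zero by auto
  then show ?thesis unfolding Ev_def by simp
qed

lemma Ev_rec:
  assumes i: "0 < i" "i < N"
  shows "Ev i = 1 + (\<Sum>l=1..k. p l * Ev (clampN N (int i + int l)) + q l * Ev (clampN N (int i - int l)))"
proof -
  have iN: "i \<le> N" using i by simp
  have sm: "summable (t j)" if "j \<le> N" for j using tail_summable that .
  have "(\<Sum>n. t i (Suc n)) = Ev i - t i 0" unfolding Ev_def by (rule suminf_split_head[OF sm[OF iN]])
  then have "Ev i = 1 + (\<Sum>n. t i (Suc n))" using i by (simp add: tail0)
  also have "(\<Sum>n. t i (Suc n)) = (\<Sum>n. \<Sum>l=1..k. p l * t (clampN N (int i + int l)) n + q l * t (clampN N (int i - int l)) n)"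
    using tail_Suc[OF iN] i by simp
  also have "\<dots> = (\<Sum>l=1..k. \<Sum>n. p l * t (clampN N (int i + int l)) n + q l * t (clampN N (int i - int l)) n)"
    by (rule suminf_sum) (intro summable_add summable_mult sm clamp_le)
  also have "\<dots> = (\<Sum>l=1..k. p l * Ev (clampN N (int i + int l)) + q l * Ev (clampN N (int i - int l)))"
  proof (rule sum.cong[OF refl])
    fix l
    show "(\<Sum>n. p l * t (clampN N (int i + int l)) n + q l * t (clampN N (int i - int l)) n) =
         p l * Ev (clampN N (int i + int l)) + q l * Ev (clampN N (int i - int l))"
      unfolding Ev_def
      by (subst suminf_add[symmetric]) (auto intro!: summable_mult sm clamp_le simp: suminf_mult[OF sm[OF clamp_le]])
  qed
  finally show ?thesis .
qed

lemma kernel_u: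
  fixes u :: "nat \<Rightarrow> complex"
  assumes u0: "u 0 = 0" and uN: "u N = 0"
    and harm: "\<And>i. 0 < i \<Longrightarrow> i < N \<Longrightarrow> u i = (\<Sum>l=1..k. complex_of_real (p l) * u (clampN N (int i + int l)) + complex_of_real (q l) * u (clampN N (int i - int l)))"
    and i: "i \<le> N"
  shows "u i = 0"
proof -
  define Mx where "Mx = (\<Sum>j\<le>N. norm (u j))"
  have Mx0: "0 \<le> Mx" unfolding Mx_def by (simp add: sum_nonneg)
  have claim: "\<forall>i\<le>N. norm (u i) \<le> Mx * t i n" for n
  proof (induction n)
    case 0
    show ?case
    proof (intro allI impI)
      fix i assume iN: "i \<le> N"
      show "norm (u i) \<le> Mx * t i 0"
      proof (cases "i = 0 \<or> i = N")
        case True then show ?thesis using u0 uN Mx0 tail_nonneg by (auto intro: mult_nonneg_nonneg)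
      next
        case False
        then have "t i 0 = 1" by (simp add: tail0)
        moreover have "norm (u i) \<le> Mx" unfolding Mx_def using iN by (intro member_le_sum) auto
        ultimately show ?thesis by simp
      qed
    qed
  next
    case (Suc n)
    show ?case
    proof (intro allI impI)
      fix i assume iN: "i \<le> N"
      show "norm (u i) \<le> Mx * t i (Suc n)"
      proof (cases "0 < i \<and> i < N")
        case False
        then have "i = 0 \<or> i = N" using iN by auto
        then show ?thesis using u0 uN Mx0 tail_nonneg by (auto intro: mult_nonneg_nonneg)
      next
        case True
        have "norm (u i) = norm (\<Sum>l=1..k. complex_of_real (p l) * u (clampN N (int i + int l)) + complex_of_real (q l) * u (clampN N (int i - int l)))"
          using harm True by simp
        also have "\<dots> \<le> (\<Sum>l=1..k. norm (complex_of_real (p l) * u (clampN N (int i + int l)) + complex_of_real (q l) * u (clampN N (int i - int l))))"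
          by (rule norm_sum)
        also have "\<dots> \<le> (\<Sum>l=1..k. p l * (Mx * t (clampN N (int i + int l)) n) + q l * (Mx * t (clampN N (int i - int l)) n))"
        proof (rule sum_mono)
          fix l assume l: "l \<in> {1..k}"
          have "norm (complex_of_real (p l) * u (clampN N (int i + int l)) + complex_of_real (q l) * u (clampN N (int i - int l)))
             \<le> norm (complex_of_real (p l) * u (clampN N (int i + int l))) + norm (complex_of_real (q l) * u (clampN N (int i - int l)))"
            by (rule norm_triangle_ineq)
          also have "\<dots> = p l * norm (u (clampN N (int i + int l))) + q l * norm (u (clampN N (int i - int l)))"
            using pnn[of l] qnn[of l] l by (simp add: norm_mult)
          also have "\<dots> \<le> p l * (Mx * t (clampN N (int i + int l)) n) + q l * (Mx * t (clampN N (int i - int l)) n)"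
            using Suc.IH clamp_le pnn[of l] qnn[of l] l by (intro add_mono mult_left_mono) auto
          finally show "norm (complex_of_real (p l) * u (clampN N (int i + int l)) + complex_of_real (q l) * u (clampN N (int i - int l)))
             \<le> p l * (Mx * t (clampN N (int i + int l)) n) + q l * (Mx * t (clampN N (int i - int l)) n)" .
        qed
        also have "\<dots> = Mx * (\<Sum>l=1..k. p l * t (clampN N (int i + int l)) n + q l * t (clampN N (int i - int l)) n)"
          by (simp add: sum_distrib_left algebra_simps)
        also have "\<dots> = Mx * t i (Suc n)" using tail_Suc[OF iN] True by simp
        finally show ?thesis .
      qed
    qed
  qed
  have lim: "(\<lambda>n. Mx * t i n) \<longlonglongrightarrow> Mx * 0"
    by (intro tendsto_mult tendsto_const summable_LIMSEQ_zero tail_summable i)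
  have "norm (u i) \<le> Mx * 0"
    by (rule LIMSEQ_le_const[OF lim]) (use claim i in auto)
  then show ?thesis by simp
qed

end


lemma sum_shift_lessThan:
  fixes g :: "nat \<Rightarrow> 'a::comm_monoid_add"
  shows "(\<Sum>x\<in>{m..<m+n}. g x) = (\<Sum>s<n. g (m + s))"
  by (induction n) (simp_all add: add.assoc)

context leapN begin

abbreviation "M \<equiv> N + P + K - 2"

definition win :: "int \<Rightarrow> bool" where
  "win e \<longleftrightarrow> 2 - int K \<le> e \<and> e \<le> int N + int P - 1"

definition Yf :: "complex vec \<Rightarrow> int \<Rightarrow> complex" where
  "Yf y e = (if win e then y $ nat (e + int K - 2) else 0)"

definition vF :: "(int \<Rightarrow> complex) \<Rightarrow> complex vec" where
  "vF F = vec M (\<lambda>x. F (int x + 2 - int K))"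

lemma M_facts: "N + (P + K - 1) - 1 = M" "P + K - 1 \<le> M" "K - 1 + N \<le> M"
  using P_facts(1) K_facts(1) N_pos by auto

lemma vF_carrier[simp]: "vF F \<in> carrier_vec M" unfolding vF_def by simp

lemma win_idx: "win e \<Longrightarrow> nat (e + int K - 2) < M \<and> int (nat (e + int K - 2)) + 2 - int K = e"
  unfolding win_def using P_facts(1) K_facts(1) by auto

lemma Yf_vF: "win e \<Longrightarrow> Yf (vF F) e = F e"
  unfolding Yf_def vF_def using win_idx by simp

lemma idx_win: "x < M \<Longrightarrow> win (int x + 2 - int K) \<and> nat (int x + 2 - int K + int K - 2) = x"
  unfolding win_def using P_facts(1) K_facts(1) by auto

lemma vF_Yf: "y \<in> carrier_vec M \<Longrightarrow> vF (Yf y) = y"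
  unfolding vF_def Yf_def using idx_win by (intro eq_vecI) auto

lemma Lf_window:
  assumes i: "0 < i" "i < int N" and FG: "\<And>e. win e \<Longrightarrow> F e = G e"
  shows "Lf k p q F i = Lf k p q G i"
  unfolding Lf_def
proof (intro sum.cong refl)
  fix j assume "j \<in> {..<2*k}"
  show "complex_of_real (c j) * F (i + 1 + int j - int k) = complex_of_real (c j) * G (i + 1 + int j - int k)"
  proof (cases "c j = 0")
    case False
    have "k - K \<le> j" using False c_low not_le by blast
    moreover have "j < k + P" using False c_high not_less by blast
    ultimately have "win (i + 1 + int j - int k)" unfolding win_def using i K_facts(2) by auto
    then show ?thesis using FG by simp
  qed simp
qed

abbreviation "Acc i \<equiv> accordion N P K i"

lemma Acc_carrier: "Acc i \<in> carrier_mat (P + K - 1) M"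
  unfolding accordion_def by simp

lemma acc_vF:
  assumes i: "i \<le> N" and a: "a < P + K - 1"
  shows "(Acc i *\<^sub>v vF F) $ a = (if a < K - 1 then F (int a + 2 - int K)
     else if a = K - 1 then (\<Sum>s<i. F (int s + 1)) else F (int N + 1 + int a - int K))"
proof -
  have dr: "dim_row (Acc i) = P + K - 1" "dim_col (Acc i) = M" using Acc_carrier by auto
  have "(Acc i *\<^sub>v vF F) $ a = (\<Sum>x\<in>{0..<M}. Acc i $$ (a,x) * F (int x + 2 - int K))"
    using a dr unfolding vF_def by (simp add: scalar_prod_def)
  also have "\<dots> = (if a < K - 1 then F (int a + 2 - int K)
     else if a = K - 1 then (\<Sum>s<i. F (int s + 1)) else F (int N + 1 + int a - int K))"
  proof (cases "a < K - 1")
    case True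
    have "(\<Sum>x\<in>{0..<M}. Acc i $$ (a,x) * F (int x + 2 - int K)) = (\<Sum>x\<in>{0..<M}. if x = a then F (int x + 2 - int K) else 0)"
      using a True unfolding accordion_def by (intro sum.cong refl) auto
    also have "\<dots> = F (int a + 2 - int K)" using True M_facts by (simp add: sum.delta')
    finally show ?thesis using True by simp
  next
    case False
    show ?thesis
    proof (cases "a = K - 1")
      case True
      have "(\<Sum>x\<in>{0..<M}. Acc i $$ (a,x) * F (int x + 2 - int K)) = (\<Sum>x\<in>{0..<M}. if x \<in> {K-1..<K-1+i} then F (int x + 2 - int K) else 0)"
        using a True unfolding accordion_def by (intro sum.cong refl) auto
      also have "\<dots> = (\<Sum>x\<in>{K-1..<K-1+i}. F (int x + 2 - int K))"
        using M_facts i by (subst sum.If_cases) (auto intro!: sum.cong)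
      also have "\<dots> = (\<Sum>s<i. F (int (K - 1 + s) + 2 - int K))" by (rule sum_shift_lessThan)
      also have "\<dots> = (\<Sum>s<i. F (int s + 1))" using K_facts(1) by (intro sum.cong refl) (simp add: of_nat_diff add.commute)
      finally show ?thesis using True by simp
    next
      case False2: False
      define t0 where "t0 = K - 1 + N + (a - K)"
      have t0: "t0 < M" "int t0 + 2 - int K = int N + 1 + int a - int K"
        unfolding t0_def using a False False2 K_facts(1) P_facts(1) by auto
      have "(\<Sum>x\<in>{0..<M}. Acc i $$ (a,x) * F (int x + 2 - int K)) = (\<Sum>x\<in>{0..<M}. if x = t0 then F (int x + 2 - int K) else 0)"
        using a False False2 unfolding accordion_def t0_def by (intro sum.cong refl) auto
      also have "\<dots> = F (int t0 + 2 - int K)" using t0(1) by (simp add: sum.delta')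
      also have "\<dots> = F (int N + 1 + int a - int K)" by (simp only: t0(2))
      finally show ?thesis using False False2 by simp
    qed
  qed
  finally show ?thesis .
qed

lemma clamp_simps:
  "x \<le> 0 \<Longrightarrow> clampN N x = 0"
  "int N \<le> x \<Longrightarrow> clampN N x = N"
  "0 \<le> x \<Longrightarrow> x \<le> int N \<Longrightarrow> clampN N x = nat x"
  unfolding clampN_def by auto

lemma kernel_vec:
  assumes y: "y \<in> carrier_vec M" and Ay: "Acc N *\<^sub>v y = 0\<^sub>v (P + K - 1)"
    and L: "\<And>i. 0 < i \<Longrightarrow> i < int N \<Longrightarrow> Lf k p q (Yf y) i = 0"
  shows "y = 0\<^sub>v M"
proof -
  define Y where "Y = Yf y"
  have yY: "y = vF Y" unfolding Y_def using vF_Yf[OF y] by simp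
  have A0: "(Acc N *\<^sub>v vF Y) $ a = 0" if "a < P + K - 1" for a
    using Ay that unfolding yY[symmetric] by simp
  have Yz: "Y e = 0" if "e \<le> 0 \<or> int N + 1 \<le> e" for e
  proof (cases "win e")
    case False then show ?thesis unfolding Y_def Yf_def by simp
  next
    case True
    show ?thesis
    proof (cases "e \<le> 0")
      case True2: True
      define a where "a = nat (e + int K - 2)"
      have a: "a < K - 1" "a < P + K - 1" "int a + 2 - int K = e"
        using True True2 P_facts(1) K_facts(1) unfolding a_def win_def by auto
      show ?thesis using A0[OF a(2)] acc_vF[of N a Y] a by simp
    next
      case False
      then have e: "int N + 1 \<le> e" using that by simp
      define a where "a = nat (e - int N - 1 + int K)"
      have a: "\<not> a < K - 1" "a \<noteq> K - 1" "a < P + K - 1" "int N + 1 + int a - int K = e"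
        using True e P_facts(1) K_facts(1) unfolding a_def win_def by auto
      show ?thesis using A0[OF a(3)] acc_vF[of N a Y] a by simp
    qed
  qed
  have Ysum: "(\<Sum>s<N. Y (int s + 1)) = 0"
    using A0[of "K - 1"] acc_vF[of N "K - 1" Y] P_facts(1) K_facts(1) by simp
  define u where "u j = (\<Sum>s<j. Y (int s + 1))" for j
  define U where "U x = u (clampN N x)" for x
  have u0: "u 0 = 0" unfolding u_def by simp
  have uN: "u N = 0" unfolding u_def using Ysum .
  have dU: "U e - U (e - 1) = Y e" for e
  proof -
    consider "e \<le> 0" | "1 \<le> e \<and> e \<le> int N" | "int N + 1 \<le> e" by linarith
    then show ?thesis
    proof cases
      case 1 then show ?thesis unfolding U_def using Yz by (simp add: clamp_simps)
    next
      case 2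
      define m where "m = nat e - 1"
      have m: "e = int (Suc m)" "Suc m \<le> N" using 2 unfolding m_def by auto
      have "U e = u (Suc m)" unfolding U_def m using m by (simp add: clamp_simps del: of_nat_Suc)
      moreover have "U (e - 1) = u m" unfolding U_def m using m by (simp add: clamp_simps)
      ultimately show ?thesis unfolding u_def m by (simp add: add.commute)
    next
      case 3 then show ?thesis unfolding U_def using Yz by (simp add: clamp_simps)
    qed
  qed
  have harm: "u i = (\<Sum>l=1..k. complex_of_real (p l) * u (clampN N (int i + int l)) + complex_of_real (q l) * u (clampN N (int i - int l)))"
    if i: "0 < i" "i < N" for i
  proof -
    have "(\<Sum>l=1..k. complex_of_real (p l) * U (int i + int l) + complex_of_real (q l) * U (int i - int l)) - U (int i)
        = Lf k p q (\<lambda>e. U e - U (e - 1)) (int i)" by (rule GI)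
    also have "\<dots> = Lf k p q Y (int i)" unfolding dU ..
    also have "\<dots> = 0" unfolding Y_def using L i by simp
    finally show ?thesis unfolding U_def using i by (simp add: clamp_simps)
  qed
  have uz: "u j = 0" if "j \<le> N" for j
    using kernel_u[OF u0 uN harm that] by simp
  have "Y e = 0" for e
  proof -
    have "Y e = U e - U (e - 1)" using dU by simp
    also have "\<dots> = 0" unfolding U_def using uz clamp_le by simp
    finally show ?thesis .
  qed
  then have "Y = (\<lambda>_. 0)" by auto
  then show ?thesis unfolding yY vF_def by (auto intro: eq_vecI)
qed

end


locale leapZ = leapN +
  fixes zs :: "complex list"
  assumes zdist: "distinct zs" and zset: "set zs = {z. z \<noteq> 0 \<and> poly (chi k p q) z = 0}"
begin

abbreviation "Ch \<equiv> chi k p q"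
abbreviation "ZC \<equiv> Z_cols Ch zs"
abbreviation "R \<equiv> P + K - 1"
abbreviation "Zm \<equiv> Zmat N R K Ch zs"

lemma len_cols: "length ZC = R"
proof -
  have "length ZC = sum_list (map (\<lambda>z. order z Ch) zs)"
    unfolding Z_cols_def length_concat map_map comp_def length_map length_upt by simp
  also have "\<dots> = (\<Sum>z\<in>set zs. order z Ch)" by (rule sum_list_distinct_conv_sum_set[OF zdist])
  also have "\<dots> = R" unfolding zset by (rule sum_orders_chi)
  finally show ?thesis .
qed

lemma col_mem:
  assumes "b < R" "ZC ! b = (z, l)"
  shows "z \<in> set zs" "1 \<le> l" "l \<le> order z Ch"
proof -
  have "(z, l) \<in> set ZC" using assms len_cols by (metis nth_mem)
  then show "z \<in> set zs" "1 \<le> l" "l \<le> order z Ch" unfolding Z_cols_def by auto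
qed

lemma col_exists:
  assumes "z \<in> set zs" "1 \<le> l" "l \<le> order z Ch"
  obtains b where "b < R" "ZC ! b = (z, l)"
proof -
  have "(z, l) \<in> set (map (\<lambda>l. (z, l)) [1..<order z Ch + 1])" using assms by auto
  then have "(z, l) \<in> set ZC" unfolding Z_cols_def using assms(1) by auto
  then show ?thesis using that len_cols by (metis in_set_conv_nth)
qed

definition colF :: "nat \<Rightarrow> int \<Rightarrow> complex" where
  "colF b = Zcolfun (fst (ZC ! b)) (snd (ZC ! b))"

lemma Zm_carrier: "Zm \<in> carrier_mat M R"
  unfolding Zmat_def using len_cols M_facts by simp

lemma Zm_index: "x < M \<Longrightarrow> b < R \<Longrightarrow> Zm $$ (x, b) = colF b (int x + 2 - int K)"
  unfolding Zmat_def colF_def Zcolfun_def using len_cols M_facts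
  by (simp add: split_beta Let_def)

lemma Zm_vec: "v \<in> carrier_vec R \<Longrightarrow> Zm *\<^sub>v v = vF (\<lambda>e. \<Sum>b<R. v $ b * colF b e)"
  unfolding vF_def using Zm_carrier
  by (intro eq_vecI) (auto simp: scalar_prod_def Zm_index[simplified] mult.commute lessThan_atLeast0)

lemma Lf_colF: "b < R \<Longrightarrow> Lf k p q (colF b) i = 0"
proof -
  assume b: "b < R"
  obtain z l where zl: "ZC ! b = (z, l)" by (cases "ZC ! b")
  have "z \<noteq> 0" using col_mem(1)[OF b zl] zset by auto
  then show ?thesis unfolding colF_def zl using Lf_Zcol col_mem[OF b zl] by simp
qed

lemma Lf_Zvec: "Lf k p q (\<lambda>e. \<Sum>b<R. v $ b * colF b e) i = 0"
  by (simp add: Lf_sum Lf_scale Lf_colF)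

lemma sum_orders_zs: "(\<Sum>z\<in>set zs. order z Ch) = R"
  unfolding zset by (rule sum_orders_chi)

lemma Zm_inj:
  assumes v: "v \<in> carrier_vec R" and Zv: "Zm *\<^sub>v v = 0\<^sub>v M"
  shows "v = 0\<^sub>v R"
proof -
  define Z' where "Z' = mat R R (\<lambda>(x,b). Zm $$ (x,b))"
  have Z'c: "Z' \<in> carrier_mat R R" unfolding Z'_def by simp
  have Z'i: "x < R \<Longrightarrow> b < R \<Longrightarrow> Z' $$ (x,b) = colF b (int x + 2 - int K)" for x b
    unfolding Z'_def using M_facts(2) by (simp add: Zm_index[simplified])
  have detZ': "det Z' \<noteq> 0"
  proof
    assume "det Z' = 0"
    then have "det (transpose_mat Z') = 0" using det_transpose[OF Z'c] by simp
    then obtain d where d: "d \<in> carrier_vec R" "d \<noteq> 0\<^sub>v R" "transpose_mat Z' *\<^sub>v d = 0\<^sub>v R"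
      using det_0_iff_vec_prod_zero[of "transpose_mat Z'" R] Z'c by auto
    have col0: "(\<Sum>x<R. d $ x * colF b (int x + 2 - int K)) = 0" if b: "b < R" for b
    proof -
      have "(transpose_mat Z' *\<^sub>v d) $ b = 0" by (simp only: d(3)) (metis b index_zero_vec(1))
      moreover have "(transpose_mat Z' *\<^sub>v d) $ b = (\<Sum>x\<in>{0..<R}. Z' $$ (x, b) * d $ x)"
        using b Z'c d(1) by (simp add: scalar_prod_def)
      moreover have "(\<Sum>x\<in>{0..<R}. Z' $$ (x, b) * d $ x) = (\<Sum>x<R. d $ x * colF b (int x + 2 - int K))"
        using b by (auto simp: Z'i lessThan_atLeast0 mult.commute intro!: sum.cong)
      ultimately show ?thesis by simp
    qed
    have "\<forall>x<R. d $ x = 0"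
    proof (rule hermite_core[of "set zs" "\<lambda>z. order z Ch" R "\<lambda>x. d $ x" "of_int (2 - int K)"])
      show "finite (set zs)" by simp
      show "0 \<notin> set zs" using zset by auto
      show "(\<Sum>z\<in>set zs. order z Ch) = R" by (rule sum_orders_zs)
      show "\<forall>z\<in>set zs. \<forall>a<order z Ch. (\<Sum>x<R. d $ x * (of_nat x + of_int (2 - int K)) ^ a * z ^ x) = 0"
      proof (intro ballI allI impI)
        fix z a assume z: "z \<in> set zs" and a: "a < order z Ch"
        have z0: "z \<noteq> 0" using z zset by auto
        obtain b where b: "b < R" "ZC ! b = (z, Suc a)" using col_exists[OF z, of "Suc a"] a by auto
        have "0 = (\<Sum>x<R. d $ x * colF b (int x + 2 - int K))" using col0[OF b(1)] by simp
        also have "\<dots> = (\<Sum>x<R. z powi (2 - int K) * (d $ x * (of_nat x + of_int (2 - int K)) ^ a * z ^ x))"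
        proof (intro sum.cong refl)
          fix x
          have e1: "int x + 2 - int K = int x + (2 - int K)" by simp
          have "z powi (int x + (2 - int K)) = z ^ x * z powi (2 - int K)"
            using z0 by (simp add: power_int_add)
          then show "d $ x * colF b (int x + 2 - int K) = z powi (2 - int K) * (d $ x * (of_nat x + of_int (2 - int K)) ^ a * z ^ x)"
            unfolding colF_def b(2) Zcolfun_def e1 by simp
        qed
        also have "\<dots> = z powi (2 - int K) * (\<Sum>x<R. d $ x * (of_nat x + of_int (2 - int K)) ^ a * z ^ x)"
          by (simp add: sum_distrib_left)
        finally show "(\<Sum>x<R. d $ x * (of_nat x + of_int (2 - int K)) ^ a * z ^ x) = 0"
          using z0 by simp
      qed
    qed
    then have "d = 0\<^sub>v R" using d(1) by (intro eq_vecI) auto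
    with d(2) show False by simp
  qed
  have "Z' *\<^sub>v v = 0\<^sub>v R"
  proof (intro eq_vecI)
    fix x assume "x < dim_vec (0\<^sub>v R :: complex vec)"
    then have x: "x < R" by simp
    have "(Z' *\<^sub>v v) $ x = (\<Sum>b\<in>{0..<R}. Z' $$ (x,b) * v $ b)"
      using x Z'c v by (simp add: scalar_prod_def)
    also have "\<dots> = (\<Sum>b\<in>{0..<R}. Zm $$ (x,b) * v $ b)"
      unfolding Z'_def using x by (intro sum.cong refl) simp
    also have "\<dots> = (Zm *\<^sub>v v) $ x"
      using x Zm_carrier v M_facts by (simp add: scalar_prod_def)
    also have "\<dots> = 0" using Zv x M_facts by simp
    finally show "(Z' *\<^sub>v v) $ x = (0\<^sub>v R) $ x" using x by simp
  qed (use Z'c in simp)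
  then show ?thesis using det_0_iff_vec_prod_zero[OF Z'c] detZ' v by auto
qed

abbreviation "Bm \<equiv> Acc N * Zm"

lemma Bm_carrier: "Bm \<in> carrier_mat R R"
  by (rule mult_carrier_mat[OF Acc_carrier Zm_carrier])

lemma det_Bm: "det Bm \<noteq> 0"
proof
  assume "det Bm = 0"
  then obtain v where v: "v \<in> carrier_vec R" "v \<noteq> 0\<^sub>v R" "Bm *\<^sub>v v = 0\<^sub>v R"
    using det_0_iff_vec_prod_zero[OF Bm_carrier] by auto
  define y where "y = Zm *\<^sub>v v"
  have yc: "y \<in> carrier_vec M" unfolding y_def using Zm_carrier v by simp
  have Ay: "Acc N *\<^sub>v y = 0\<^sub>v R" unfolding y_def
    using assoc_mult_mat_vec[OF Acc_carrier Zm_carrier v(1)] v(3) by simp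
  have L: "Lf k p q (Yf y) i = 0" if "0 < i" "i < int N" for i
  proof -
    have "Lf k p q (Yf y) i = Lf k p q (\<lambda>e. \<Sum>b<R. v $ b * colF b e) i"
      unfolding y_def Zm_vec[OF v(1)] by (rule Lf_window[OF that]) (simp add: Yf_vF)
    also have "\<dots> = 0" by (rule Lf_Zvec)
    finally show ?thesis .
  qed
  have "y = 0\<^sub>v M" by (rule kernel_vec[OF yc Ay L])
  then have "v = 0\<^sub>v R" using Zm_inj[OF v(1)] unfolding y_def by simp
  with v(2) show False by simp
qed

end


context leapZ begin

lemma Acc_dims[simp]: "dim_row (Acc i) = R" "dim_col (Acc i) = M"
  using Acc_carrier[of i] by auto

lemma Zm_dims[simp]: "dim_row Zm = M" "dim_col Zm = R"
  using Zm_carrier by auto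

lemma vF_diff: "vF (\<lambda>e. F e - G e) = vF F - vF G"
  unfolding vF_def by (intro eq_vecI) auto

lemma Yf_zero: "Yf (0\<^sub>v M) e = 0"
  unfolding Yf_def using win_idx by auto

lemma Bm_inverse: obtains Bi where "Bi \<in> carrier_mat R R" "Bm * Bi = 1\<^sub>m R"
proof -
  have U: "Bm \<in> Units (ring_mat TYPE(complex) R ())"
    by (rule det_non_zero_imp_unit[OF Bm_carrier det_Bm])
  show ?thesis
  proof (cases "mat_inverse Bm")
    case None
    then show ?thesis using mat_inverse(1)[OF Bm_carrier None, of "()"] U by simp
  next
    case (Some Bi)
    then show ?thesis using mat_inverse(2)[OF Bm_carrier Some] that by auto
  qed
qed

definition "dF e = delta_entry (drift k p q) (variance_xi k p q) e"
definition "bvec = Acc N *\<^sub>v vF dF"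
definition "cv = (SOME c. c \<in> carrier_vec R \<and> Bm *\<^sub>v c = - bvec)"

lemma bvec_carrier: "bvec \<in> carrier_vec R"
  unfolding bvec_def by (rule mult_mat_vec_carrier[OF Acc_carrier vF_carrier])

lemma cv_prop: "cv \<in> carrier_vec R \<and> Bm *\<^sub>v cv = - bvec"
proof -
  obtain Bi where Bi: "Bi \<in> carrier_mat R R" "Bm * Bi = 1\<^sub>m R" by (rule Bm_inverse)
  define c where "c = Bi *\<^sub>v (- bvec)"
  have "c \<in> carrier_vec R" unfolding c_def using Bi bvec_carrier by simp
  moreover have "Bm *\<^sub>v c = - bvec"
    unfolding c_def using assoc_mult_mat_vec[OF Bm_carrier Bi(1), of "- bvec"] Bi(2) bvec_carrier by simp
  ultimately show ?thesis unfolding cv_def by (rule someI[where x=c, OF conjI])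
qed

definition "XF e = (\<Sum>b<R. cv $ b * colF b e) + dF e"

lemma xv_eq: "vF XF = Zm *\<^sub>v cv + vF dF"
  using Zm_vec[of cv] cv_prop unfolding XF_def vF_def by (intro eq_vecI) auto

lemma Acc_XF: "Acc N *\<^sub>v vF XF = 0\<^sub>v R"
proof -
  have "Acc N *\<^sub>v vF XF = Acc N *\<^sub>v (Zm *\<^sub>v cv) + Acc N *\<^sub>v vF dF"
    unfolding xv_eq using cv_prop Zm_carrier Acc_carrier
    by (intro mult_add_distrib_mat_vec) auto
  also have "Acc N *\<^sub>v (Zm *\<^sub>v cv) = Bm *\<^sub>v cv"
    using assoc_mult_mat_vec[OF Acc_carrier Zm_carrier, of cv] cv_prop by simp
  also have "\<dots> = - bvec" using cv_prop by simp
  finally show ?thesis unfolding bvec_def[symmetric] using bvec_carrier by simp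
qed

lemma Lf_XF: "Lf k p q XF i = -1"
proof -
  have "Lf k p q XF i = Lf k p q (\<lambda>e. \<Sum>b<R. cv $ b * colF b e) i + Lf k p q dF i"
    unfolding XF_def by (rule Lf_add)
  also have "\<dots> = -1" unfolding dF_def using Lf_Zvec[simplified] by (simp add: Lf_delta)
  finally show ?thesis .
qed

definition "VE x = complex_of_real (Ev (clampN N x))"
definition "XE e = VE e - VE (e - 1)"

lemma Acc_XE: "Acc N *\<^sub>v vF XE = 0\<^sub>v R"
proof (intro eq_vecI)
  show "dim_vec (Acc N *\<^sub>v vF XE) = dim_vec (0\<^sub>v R :: complex vec)" using Acc_carrier by simp
  fix a assume "a < dim_vec (0\<^sub>v R :: complex vec)"
  then have a: "a < R" by simp
  have "(Acc N *\<^sub>v vF XE) $ a = 0"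
  proof (cases "a < K - 1")
    case True
    then have "int a + 2 - int K \<le> 0" by simp
    then show ?thesis using acc_vF[OF le_refl a] True unfolding XE_def VE_def by (simp add: clamp_simps)
  next
    case False
    show ?thesis
    proof (cases "a = K - 1")
      case True
      have "(\<Sum>s<N. XE (int s + 1)) = (\<Sum>s<N. VE (int (Suc s)) - VE (int s))"
        unfolding XE_def by (intro sum.cong refl) (simp add: add.commute)
      also have "\<dots> = VE (int N) - VE (int 0)" by (rule sum_lessThan_telescope)
      also have "\<dots> = 0" unfolding VE_def using Ev_bd by (simp add: clamp_simps)
      finally show ?thesis using acc_vF[OF le_refl a] True by simp
    next
      case False2: False
      have "int N + 1 \<le> int N + 1 + int a - int K" using False False2 by simp
      then show ?thesis using acc_vF[OF le_refl a] False False2 unfolding XE_def VE_def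
        by (simp add: clamp_simps)
    qed
  qed
  then show "(Acc N *\<^sub>v vF XE) $ a = (0\<^sub>v R) $ a" using a by simp
qed

lemma Lf_XE: assumes i: "0 < i" "i < int N" shows "Lf k p q XE i = -1"
proof -
  have "(\<Sum>l=1..k. complex_of_real (p l) * VE (i + int l) + complex_of_real (q l) * VE (i - int l)) - VE i
     = Lf k p q (\<lambda>e. VE e - VE (e - 1)) i" by (rule GI)
  then have "Lf k p q XE i = (\<Sum>l=1..k. complex_of_real (p l) * VE (i + int l) + complex_of_real (q l) * VE (i - int l)) - VE i"
    unfolding XE_def by simp
  also have "\<dots> = complex_of_real ((\<Sum>l=1..k. p l * Ev (clampN N (int (nat i) + int l)) + q l * Ev (clampN N (int (nat i) - int l))) - Ev (nat i))"
    unfolding VE_def using i by (simp add: clamp_simps)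
  also have "\<dots> = -1" using Ev_rec[of "nat i"] i by simp
  finally show ?thesis .
qed

lemma Lf_diff: "Lf k p q (\<lambda>e. F e - G e) i = Lf k p q F i - Lf k p q G i"
  unfolding Lf_def by (simp add: sum_subtractf algebra_simps)

lemma XF_XE: "win e \<Longrightarrow> XF e = XE e"
proof -
  assume e: "win e"
  define D where "D = vF (\<lambda>e. XF e - XE e)"
  have Dc: "D \<in> carrier_vec M" unfolding D_def by simp
  have AD: "Acc N *\<^sub>v D = 0\<^sub>v R"
    unfolding D_def vF_diff using Acc_XF Acc_XE
    by (subst mult_minus_distrib_mat_vec[OF Acc_carrier]) auto
  have L: "Lf k p q (Yf D) i = 0" if i: "0 < i" "i < int N" for i
  proof -
    have "Lf k p q (Yf D) i = Lf k p q (\<lambda>e. XF e - XE e) i"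
      by (rule Lf_window[OF i]) (simp add: D_def Yf_vF)
    also have "\<dots> = 0" unfolding Lf_diff Lf_XF Lf_XE[OF i] by simp
    finally show ?thesis .
  qed
  have "D = 0\<^sub>v M" by (rule kernel_vec[OF Dc AD L])
  then have "Yf D e = 0" using Yf_zero by simp
  then show ?thesis using e unfolding D_def by (simp add: Yf_vF)
qed

lemma V_eq: assumes i: "i \<le> N" shows "(\<Sum>s<i. XF (int s + 1)) = complex_of_real (Ev i)"
proof -
  have "(\<Sum>s<i. XF (int s + 1)) = (\<Sum>s<i. VE (int (Suc s)) - VE (int s))"
  proof (intro sum.cong refl)
    fix s assume "s \<in> {..<i}"
    then have "win (int s + 1)" unfolding win_def using i P_facts(1) K_facts(1) by auto
    then show "XF (int s + 1) = VE (int (Suc s)) - VE (int s)" using XF_XE unfolding XE_def by (simp add: add.commute)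
  qed
  also have "\<dots> = VE (int i) - VE (int 0)" by (rule sum_lessThan_telescope)
  also have "\<dots> = complex_of_real (Ev i)" unfolding VE_def using i Ev_bd by (simp add: clamp_simps)
  finally show ?thesis .
qed

end


context leapZ begin

abbreviation "Ae i \<equiv> accordion_ext N P K i"
abbreviation "Zs \<equiv> Zstar N R K Ch zs (drift k p q) (variance_xi k p q)"

definition "Tm = four_block_mat (1\<^sub>m R) (mat R 1 (\<lambda>(a,_). cv $ a)) (0\<^sub>m 1 R) (1\<^sub>m 1)"
definition "Wmat = mat M (R + 1) (\<lambda>(x,b). if b < R then Zm $$ (x,b) else XF (int x + 2 - int K))"

lemma Tm_carrier: "Tm \<in> carrier_mat (R+1) (R+1)"
  unfolding Tm_def by (rule four_block_carrier_mat) auto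

lemma det_Tm: "det Tm = 1"
  unfolding Tm_def by (subst det_four_block_mat_lower_left_zero[of _ R _ 1]) auto

lemma Zs_carrier: "Zs \<in> carrier_mat M (R+1)"
  unfolding Zstar_def using len_cols M_facts by simp

lemma Zs_index: "x < M \<Longrightarrow> b < R + 1 \<Longrightarrow> Zs $$ (x,b) = (if b < R then Zm $$ (x,b) else dF (int x + 2 - int K))"
  unfolding Zstar_def dF_def using len_cols M_facts by simp

lemma Ae_carrier: "Ae i \<in> carrier_mat (R+1) M"
  unfolding accordion_ext_def using P_facts(1) K_facts(1) by simp

lemma Ae_index: "a < R + 1 \<Longrightarrow> x < M \<Longrightarrow> Ae i $$ (a,x) = (if a < R then Acc N $$ (a,x) else Acc i $$ (K - 1, x))"
  unfolding accordion_ext_def using P_facts(1) K_facts(1) by simp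

lemma Tm_index: "a < R + 1 \<Longrightarrow> b < R + 1 \<Longrightarrow> Tm $$ (a,b) =
   (if a < R then (if b < R then (if a = b then 1 else 0) else cv $ a) else (if b < R then 0 else 1))"
  unfolding Tm_def by (simp add: index_mat_four_block)

lemma dims[simp]: "dim_row (Ae i) = R + 1" "dim_col (Ae i) = M" "dim_row Wmat = M" "dim_col Wmat = R + 1"
  "dim_row Zs = M" "dim_col Zs = R + 1" "dim_row Tm = R + 1" "dim_col Tm = R + 1"
  using Ae_carrier[of i] Zs_carrier Tm_carrier unfolding Wmat_def by auto

lemmas Zs_index' = Zs_index[simplified]
lemmas Tm_index' = Tm_index[simplified]
lemmas Ae_index' = Ae_index[simplified]
lemmas Zm_index' = Zm_index[simplified]
lemmas Zm_dims' = Zm_dims[simplified]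

lemma ZsT: "Zs * Tm = Wmat"
proof (rule eq_matI)
  show "dim_row (Zs * Tm) = dim_row Wmat" "dim_col (Zs * Tm) = dim_col Wmat"
    using Zs_carrier Tm_carrier unfolding Wmat_def by auto
  fix x b assume "x < dim_row Wmat" "b < dim_col Wmat"
  then have x: "x < M" and b: "b < R + 1" unfolding Wmat_def by auto
  have "(Zs * Tm) $$ (x,b) = (\<Sum>a\<in>{0..<R+1}. Zs $$ (x,a) * Tm $$ (a,b))"
    using Zs_carrier Tm_carrier x b by (simp add: scalar_prod_def)
  also have "\<dots> = (\<Sum>a<R. Zs $$ (x,a) * Tm $$ (a,b)) + Zs $$ (x,R) * Tm $$ (R,b)"
    by (simp add: lessThan_atLeast0[symmetric])
  also have "\<dots> = Wmat $$ (x,b)"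
  proof (cases "b < R")
    case True
    have "(\<Sum>a<R. Zs $$ (x,a) * Tm $$ (a,b)) = (\<Sum>a<R. if a = b then Zs $$ (x,a) else 0)"
      using b True by (intro sum.cong refl) (auto simp: Tm_index')
    also have "\<dots> = Zs $$ (x,b)" using True by (simp add: sum.delta')
    finally show ?thesis using True x b by (simp add: Tm_index' Zs_index' Wmat_def)
  next
    case False
    then have bR: "b = R" using b by simp
    have "(\<Sum>a<R. Zs $$ (x,a) * Tm $$ (a,b)) = (\<Sum>a<R. cv $ a * colF a (int x + 2 - int K))"
      using bR x by (intro sum.cong refl) (auto simp: Tm_index' Zs_index' Zm_index' mult.commute)
    then show ?thesis using bR x by (simp add: Tm_index' Zs_index' Wmat_def XF_def)
  qed
  finally show "(Zs * Tm) $$ (x,b) = Wmat $$ (x,b)" .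
qed

abbreviation "Vi i \<equiv> (\<Sum>s<i. XF (int s + 1))"

lemma AeW: assumes i: "i \<le> N"
  shows "Ae i * Wmat = four_block_mat Bm (0\<^sub>m R 1) (mat 1 R (\<lambda>(_,b). (Acc i * Zm) $$ (K - 1, b))) (mat 1 1 (\<lambda>_. Vi i))"
proof (rule eq_matI)
  have Wc: "Wmat \<in> carrier_mat M (R+1)" unfolding Wmat_def by simp
  show "dim_row (Ae i * Wmat) = dim_row (four_block_mat Bm (0\<^sub>m R 1) (mat 1 R (\<lambda>(_,b). (Acc i * Zm) $$ (K - 1, b))) (mat 1 1 (\<lambda>_. Vi i)))"
    "dim_col (Ae i * Wmat) = dim_col (four_block_mat Bm (0\<^sub>m R 1) (mat 1 R (\<lambda>(_,b). (Acc i * Zm) $$ (K - 1, b))) (mat 1 1 (\<lambda>_. Vi i)))"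
    using Ae_carrier Wc Bm_carrier by auto
  fix a b assume ab: "a < dim_row (four_block_mat Bm (0\<^sub>m R 1) (mat 1 R (\<lambda>(_,b). (Acc i * Zm) $$ (K - 1, b))) (mat 1 1 (\<lambda>_. Vi i)))"
    "b < dim_col (four_block_mat Bm (0\<^sub>m R 1) (mat 1 R (\<lambda>(_,b). (Acc i * Zm) $$ (K - 1, b))) (mat 1 1 (\<lambda>_. Vi i)))"
  then have a: "a < R + 1" and b: "b < R + 1" using Bm_carrier by auto
  have K1: "K - 1 < R" using P_facts(1) K_facts(1) by simp
  have lhs: "(Ae i * Wmat) $$ (a,b) = (\<Sum>x\<in>{0..<M}. Ae i $$ (a,x) * Wmat $$ (x,b))"
    using Ae_carrier Wc a b by (simp add: scalar_prod_def)
  define RHS where "RHS = four_block_mat Bm (0\<^sub>m R 1) (mat 1 R (\<lambda>(_,b). (Acc i * Zm) $$ (K - 1, b))) (mat 1 1 (\<lambda>_. Vi i))"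
  have rhs: "RHS $$ (a,b) = (if a < R then (if b < R then Bm $$ (a,b) else 0)
      else (if b < R then (Acc i * Zm) $$ (K - 1, b) else Vi i))"
  proof -
    have dB: "dim_row Bm = R" "dim_col Bm = R" using Bm_carrier by auto
    have "RHS $$ (a,b) = (if a < dim_row Bm then (if b < dim_col Bm then Bm $$ (a,b) else (0\<^sub>m R 1) $$ (a, b - dim_col Bm))
      else (if b < dim_col Bm then (mat 1 R (\<lambda>(_,b). (Acc i * Zm) $$ (K - 1, b))) $$ (a - dim_row Bm, b)
            else (mat 1 1 (\<lambda>_. Vi i)) $$ (a - dim_row Bm, b - dim_col Bm)))"
      unfolding RHS_def by (rule index_mat_four_block(1)) (use a b dB in auto)
    then show ?thesis unfolding dB using a b by auto
  qed
  have "(\<Sum>x\<in>{0..<M}. Ae i $$ (a,x) * Wmat $$ (x,b)) = RHS $$ (a,b)"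
  proof (cases "a < R")
    case True
    show ?thesis
    proof (cases "b < R")
      case True2: True
      have "(\<Sum>x\<in>{0..<M}. Ae i $$ (a,x) * Wmat $$ (x,b)) = (\<Sum>x\<in>{0..<M}. Acc N $$ (a,x) * Zm $$ (x,b))"
        using True True2 a by (intro sum.cong refl) (simp add: Ae_index' Wmat_def)
      also have "\<dots> = Bm $$ (a,b)" using True True2 by (simp add: scalar_prod_def Zm_dims')
      finally show ?thesis using True True2 rhs by simp
    next
      case False
      have "(\<Sum>x\<in>{0..<M}. Ae i $$ (a,x) * Wmat $$ (x,b)) = (Acc N *\<^sub>v vF XF) $ a"
        using True False a b by (auto simp: Ae_index' Wmat_def scalar_prod_def vF_def intro!: sum.cong)
      also have "\<dots> = 0" using Acc_XF True by simp
      finally show ?thesis using True False rhs by simp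
    qed
  next
    case False
    then have aR: "a = R" using a by simp
    show ?thesis
    proof (cases "b < R")
      case True2: True
      have "(\<Sum>x\<in>{0..<M}. Ae i $$ (a,x) * Wmat $$ (x,b)) = (\<Sum>x\<in>{0..<M}. Acc i $$ (K - 1,x) * Zm $$ (x,b))"
        using aR True2 a by (intro sum.cong refl) (simp add: Ae_index' Wmat_def)
      also have "\<dots> = (Acc i * Zm) $$ (K - 1, b)" using K1 True2 by (simp add: scalar_prod_def Zm_dims')
      finally show ?thesis using aR True2 rhs by simp
    next
      case False2: False
      have "(\<Sum>x\<in>{0..<M}. Ae i $$ (a,x) * Wmat $$ (x,b)) = (Acc i *\<^sub>v vF XF) $ (K - 1)"
        using aR False2 a b K1 by (auto simp: Ae_index' Wmat_def scalar_prod_def vF_def intro!: sum.cong)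
      also have "\<dots> = Vi i" using acc_vF[OF i K1] by simp
      finally show ?thesis using aR False2 rhs by simp
    qed
  qed
  then show "(Ae i * Wmat) $$ (a,b) = RHS $$ (a,b)" using lhs by simp
qed

lemma det_identity: assumes i: "i \<le> N" shows "det (Ae i * Zs) = det Bm * Vi i"
proof -
  have AZ: "Ae i * Zs \<in> carrier_mat (R+1) (R+1)" by (rule mult_carrier_mat[OF Ae_carrier Zs_carrier])
  have "det (Ae i * Zs) = det (Ae i * Zs) * det Tm" using det_Tm by simp
  also have "\<dots> = det ((Ae i * Zs) * Tm)" using det_mult[OF AZ Tm_carrier] by simp
  also have "(Ae i * Zs) * Tm = Ae i * (Zs * Tm)" using Ae_carrier Zs_carrier Tm_carrier by (rule assoc_mult_mat)
  also have "\<dots> = Ae i * Wmat" unfolding ZsT ..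
  also have "det \<dots> = det Bm * det (mat 1 1 (\<lambda>_. Vi i))"
    unfolding AeW[OF i] by (rule det_four_block_mat_upper_right_zero_col[OF Bm_carrier refl]) auto
  also have "det (mat 1 1 (\<lambda>_. Vi i)) = Vi i" by (subst det_single) auto
  finally show ?thesis .
qed

end

theorem mainTheorem3:
  fixes k N :: nat and p q :: "nat \<Rightarrow> real" and zs :: "complex list"
  assumes "k \<ge> 1"
    and "\<And>j. 1 \<le> j \<Longrightarrow> j \<le> k \<Longrightarrow> p j \<ge> 0"
    and "\<And>j. 1 \<le> j \<Longrightarrow> j \<le> k \<Longrightarrow> q j \<ge> 0"
    and "(\<Sum>j = 1..k. p j + q j) = 1"
    and "(\<Sum>j = 1..k. p j) > 0"
    and "(\<Sum>j = 1..k. q j) > 0"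
    and "N \<ge> kp k p + kq k q"
    and "distinct zs"
    and "set zs = {z. z \<noteq> 0 \<and> poly (chi k p q) z = 0}"
    and "i \<le> N"
  shows "det (accordion N (kp k p) (kq k q) N *
               Zmat N (kp k p + kq k q - 1) (kq k q) (chi k p q) zs) \<noteq> 0
    \<and> expected_absorption k p q N i \<noteq> \<infinity>
    \<and> complex_of_real (enn2real (expected_absorption k p q N i)) =
        det (accordion_ext N (kp k p) (kq k q) i *
             Zstar N (kp k p + kq k q - 1) (kq k q) (chi k p q) zs
                   (drift k p q) (variance_xi k p q))
      / det (accordion N (kp k p) (kq k q) N *
             Zmat N (kp k p + kq k q - 1) (kq k q) (chi k p q) zs)"
proof -
  interpret leapZ k p q N zs
    by unfold_locales (use assms in auto)
  have E: "expected_absorption k p q N i = ennreal (Ev i)" by (rule expected_eq[OF assms(10)])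
  have En: "0 \<le> Ev i" by (rule Ev_nonneg[OF assms(10)])
  have D: "det (Ae i * Zs) = det Bm * complex_of_real (Ev i)"
    using det_identity[OF assms(10)] V_eq[OF assms(10)] by simp
  show ?thesis using det_Bm E En D by simp
qed

end
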